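(* Consider three $K$-tier open access networks as described in the context, identical in point processes $\Phi_k$, powers $P_k$, target SIRs $\beta_k$ and path loss exponent: (i) an SU-BF network in which tier $k$ has $M_k>1$ antennas and $\Psi_k=1$ (so $\Delta_k=M_k$); (ii) a SISO network with $\Delta'_k=\Psi'_k=1$ for all $k$; (iii) a full SDMA network in which tier $k$ has $M''_k>1$ antennas and $\Psi''_k=M''_k$ (so $\Delta''_k=1$), where $M''_k$ need not equal $M_k$. Then the coverage probability of (i) is greater than or equal to that of (ii), which is greater than or equal to that of (iii).
   Context: Downlink $K$-tier cellular network with tiers indexed by $\mathcal{K}=\{1,\dots,K\}$. Tier-$k$ base stations (BSs) are located at the points of a stationary point process $\Phi_k\subset\mathbb{R}^2$ (not necessarily independent across tiers), transmit with per-user power $P_k>0$ and have target SIR $\beta_k>0$; each tier has positive integer channel parameters $\Delta_k,\Psi_k$ (with $M_k$ antennas and $\Psi_k\le M_k$ served users, $\Delta_k=M_k-\Psi_k+1$). $\alpha$ is the path loss exponent; a typical user is at the origin. Each BS at $x\in\Phi_k$ carries channel-power marks $h_{kx}\sim\Gamma(\Delta_k,1)$ (desired link) and $g_{kx}\sim\Gamma(\Psi_k,1)$ (interfering link), all mutually independent and independent of the point processes. $\mathrm{SIR}(x_k)=\dfrac{P_kh_{kx_k}\|x_k\|^{-\alpha}}{\sum_{j\in\mathcal{K}}\sum_{y\in\Phi_j\setminus\{x_k\}}P_jg_{jy}\|y\|^{-\alpha}}$ for $x_k\in\Phi_k$; the open access coverage probability is $\mathbb{P}\big(\bigcup_{k\in\mathcal{K}}\{\max_{x_k\in\Phi_k}\mathrm{SIR}(x_k)>\beta_k\}\big)$.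 $\Gamma(a,1)$ is the Gamma distribution with shape $a$, scale $1$. *)

theory Defs
  imports "HOL-Probability.Probability"
begin

type_synonym loc = "real^2"

text \<open>Gamma(a,1) density for a positive integer shape a (= Erlang density, rate 1).\<close>
definition gamma_density :: "nat \<Rightarrow> real \<Rightarrow> ennreal" where
  "gamma_density a x = ennreal (erlang_density (a - 1) 1 x)"

text \<open>Point processes are given by enumerations: tier k has the points
  pt k i w for the indices i with enat i < N k w (N k w possibly infinite).\<close>
definition Phi :: "(nat \<Rightarrow> nat \<Rightarrow> 'a \<Rightarrow> loc) \<Rightarrow> (nat \<Rightarrow> 'a \<Rightarrow> enat) \<Rightarrow> nat \<Rightarrow> 'a \<Rightarrow> loc set" where
  "Phi pt N k w = {pt k i w | i. enat i < N k w}"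

definition ecount :: "loc set \<Rightarrow> loc set \<Rightarrow> enat" where
  "ecount S B = (if finite (S \<inter> B) then enat (card (S \<inter> B)) else \<infinity>)"

definition cfg_space :: "loc set measure" where
  "cfg_space = sigma UNIV {{S. ecount S B = m} | B m. B \<in> sets borel \<and> bounded B}"

definition stationary :: "'a measure \<Rightarrow> ('a \<Rightarrow> loc set) \<Rightarrow> bool" where
  "stationary M X \<longleftrightarrow> (\<forall>v. distr M cfg_space X = distr M cfg_space (\<lambda>w. (\<lambda>y. y + v) ` X w))"

definition point_processes :: "'a measure \<Rightarrow> nat \<Rightarrow> (nat \<Rightarrow> nat \<Rightarrow> 'a \<Rightarrow> loc) \<Rightarrow> (nat \<Rightarrow> 'a \<Rightarrow> enat) \<Rightarrow> bool" where
  "point_processes M K pt N \<longleftrightarrow>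
     (\<forall>k\<in>{1..K}. \<forall>i. pt k i \<in> borel_measurable M) \<and>
     (\<forall>k\<in>{1..K}. N k \<in> measurable M (count_space UNIV)) \<and>
     (\<forall>k\<in>{1..K}. \<forall>w\<in>space M. \<forall>i j. enat i < N k w \<and> enat j < N k w \<and> pt k i w = pt k j w \<longrightarrow> i = j) \<and>
     (\<forall>k\<in>{1..K}. \<forall>w\<in>space M. \<forall>r::real. finite {i. enat i < N k w \<and> norm (pt k i w) \<le> r}) \<and>
     (\<forall>k\<in>{1..K}. stationary M (Phi pt N k))"

definition proc_space :: "nat \<Rightarrow> ((nat \<Rightarrow> nat \<Rightarrow> loc) \<times> (nat \<Rightarrow> enat)) measure" where
  "proc_space K = PiM {1..K} (\<lambda>_. PiM UNIV (\<lambda>_. borel)) \<Otimes>\<^sub>M PiM {1..K} (\<lambda>_. count_space UNIV)"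

definition proc :: "nat \<Rightarrow> (nat \<Rightarrow> nat \<Rightarrow> 'a \<Rightarrow> loc) \<Rightarrow> (nat \<Rightarrow> 'a \<Rightarrow> enat) \<Rightarrow> 'a \<Rightarrow> (nat \<Rightarrow> nat \<Rightarrow> loc) \<times> (nat \<Rightarrow> enat)" where
  "proc K pt N w = ((\<lambda>k\<in>{1..K}. \<lambda>i. pt k i w), (\<lambda>k\<in>{1..K}. N k w))"

definition mark_family :: "(nat \<Rightarrow> nat \<Rightarrow> 'a \<Rightarrow> real) \<Rightarrow> (nat \<Rightarrow> nat \<Rightarrow> 'a \<Rightarrow> real) \<Rightarrow> nat \<times> nat \<times> bool \<Rightarrow> 'a \<Rightarrow> real" where
  "mark_family h g = (\<lambda>(k,i,b). if b then h k i else g k i)"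

definition mark_index :: "nat \<Rightarrow> (nat \<times> nat \<times> bool) set" where
  "mark_index K = {1..K} \<times> UNIV \<times> UNIV"

text \<open>Marks for channel parameters Delta, Psi: h k i ~ Gamma(Delta k,1), g k i ~ Gamma(Psi k,1),
  all mutually independent and independent of the point processes (index None = the whole
  point process of tiers 1..K, index Some m = the single mark m).\<close>
definition marks :: "'a measure \<Rightarrow> nat \<Rightarrow> (nat \<Rightarrow> nat \<Rightarrow> 'a \<Rightarrow> loc) \<Rightarrow> (nat \<Rightarrow> 'a \<Rightarrow> enat) \<Rightarrow>
    (nat \<Rightarrow> nat) \<Rightarrow> (nat \<Rightarrow> nat) \<Rightarrow> (nat \<Rightarrow> nat \<Rightarrow> 'a \<Rightarrow> real) \<Rightarrow> (nat \<Rightarrow> nat \<Rightarrow> 'a \<Rightarrow> real) \<Rightarrow> bool" where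
  "marks M K pt N Delta Psi h g \<longleftrightarrow>
     (\<forall>k\<in>{1..K}. \<forall>i. distributed M lborel (h k i) (gamma_density (Delta k))) \<and>
     (\<forall>k\<in>{1..K}. \<forall>i. distributed M lborel (g k i) (gamma_density (Psi k))) \<and>
     prob_space.indep_sets M
        (\<lambda>j. case j of None \<Rightarrow> sets (vimage_algebra (space M) (proc K pt N) (proc_space K))
                      | Some m \<Rightarrow> sets (vimage_algebra (space M) (mark_family h g m) borel))
        (insert None (Some ` mark_index K))"

text \<open>Aggregate interference at the origin seen from the BS (k,i): all BSs of all tiers whose
  location differs from that of (k,i) (literal reading of y in Phi_j minus {x_k}).\<close>
definition interference :: "nat \<Rightarrow> (nat \<Rightarrow> real) \<Rightarrow> real \<Rightarrow> (nat \<Rightarrow> nat \<Rightarrow> 'a \<Rightarrow> loc) \<Rightarrow> (nat \<Rightarrow> 'a \<Rightarrow> enat) \<Rightarrow>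
    (nat \<Rightarrow> nat \<Rightarrow> 'a \<Rightarrow> real) \<Rightarrow> nat \<Rightarrow> nat \<Rightarrow> 'a \<Rightarrow> ennreal" where
  "interference K P \<alpha> pt N g k i w =
     (\<Sum>j\<in>{1..K}. \<Sum>l. if enat l < N j w \<and> pt j l w \<noteq> pt k i w
        then ennreal (P j * g j l w * norm (pt j l w) powr (- \<alpha>)) else 0)"

text \<open>SIR(x) > beta, written without division: beta * I < S (so I = 0, S > 0 means coverage,
  I = infinity means no coverage).\<close>
definition covered :: "nat \<Rightarrow> (nat \<Rightarrow> real) \<Rightarrow> (nat \<Rightarrow> real) \<Rightarrow> real \<Rightarrow> (nat \<Rightarrow> nat \<Rightarrow> 'a \<Rightarrow> loc) \<Rightarrow> (nat \<Rightarrow> 'a \<Rightarrow> enat) \<Rightarrow>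
    (nat \<Rightarrow> nat \<Rightarrow> 'a \<Rightarrow> real) \<Rightarrow> (nat \<Rightarrow> nat \<Rightarrow> 'a \<Rightarrow> real) \<Rightarrow> 'a \<Rightarrow> bool" where
  "covered K P \<beta> \<alpha> pt N h g w \<longleftrightarrow>
     (\<exists>k\<in>{1..K}. \<exists>i. enat i < N k w \<and>
        ennreal (\<beta> k) * interference K P \<alpha> pt N g k i w < ennreal (P k * h k i w * norm (pt k i w) powr (- \<alpha>)))"

definition coverage_prob :: "'a measure \<Rightarrow> nat \<Rightarrow> (nat \<Rightarrow> real) \<Rightarrow> (nat \<Rightarrow> real) \<Rightarrow> real \<Rightarrow> (nat \<Rightarrow> nat \<Rightarrow> 'a \<Rightarrow> loc) \<Rightarrow> (nat \<Rightarrow> 'a \<Rightarrow> enat) \<Rightarrow>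
    (nat \<Rightarrow> nat \<Rightarrow> 'a \<Rightarrow> real) \<Rightarrow> (nat \<Rightarrow> nat \<Rightarrow> 'a \<Rightarrow> real) \<Rightarrow> real" where
  "coverage_prob M K P \<beta> \<alpha> pt N h g = measure M {w \<in> space M. covered K P \<beta> \<alpha> pt N h g w}"

end

theory Submission
  imports Defs
begin

lemma upset_dom:
  fixes \<mu> \<nu> :: "real measure"
  assumes pm: "prob_space \<mu>" and pn: "prob_space \<nu>"
    and sm: "sets \<mu> = sets borel" and sn: "sets \<nu> = sets borel"
    and dom: "\<And>a. emeasure \<nu> {a<..} \<le> emeasure \<mu> {a<..}"
    and U: "U \<in> sets borel" and up: "\<And>x y. x \<in> U \<Longrightarrow> x \<le> y \<Longrightarrow> y \<in> U"
  shows "emeasure \<nu> U \<le> emeasure \<mu> U"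
proof -
  interpret m: prob_space \<mu> by fact
  interpret n: prob_space \<nu> by fact
  have sp: "space \<mu> = UNIV" "space \<nu> = UNIV" using sets_eq_imp_space_eq[OF sm] sets_eq_imp_space_eq[OF sn] by auto
  show ?thesis
  proof (cases "U = {} \<or> U = UNIV")
    case True
    then show ?thesis using m.emeasure_space_1 n.emeasure_space_1 sp by auto
  next
    case False
    then obtain u z where u: "u \<in> U" and z: "z \<notin> U" by auto
    have zl: "\<And>v. v \<in> U \<Longrightarrow> z < v" using z up by (metis not_less less_imp_le)
    have bdd: "bdd_below U" using zl by (auto intro!: bdd_belowI[of _ z] less_imp_le)
    define c where "c = Inf U"
    have cle: "\<And>v. v \<in> U \<Longrightarrow> c \<le> v" using bdd c_def by (simp add: cInf_lower)
    show ?thesis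
    proof (cases "c \<in> U")
      case False
      have "U = {c<..}"
      proof (intro equalityI subsetI)
        fix v assume "v \<in> U" then show "v \<in> {c<..}" using cle[OF \<open>v \<in> U\<close>] False by (cases "v = c") auto
      next
        fix v assume "v \<in> {c<..}"
        then have "Inf U < v" using c_def by simp
        then obtain t where "t \<in> U" "t < v" using u bdd by (metis cInf_lessD empty_iff)
        then show "v \<in> U" using up by auto
      qed
      then show ?thesis using dom by simp
    next
      case True
      have Ueq: "U = {c..}" using True cle up by auto
      define A where "A n = {c - 1 / real (Suc n)<..}" for n
      have dec: "decseq A" unfolding A_def decseq_def
        by (auto simp: frac_le)
      have inter: "(\<Inter>n. A n) = {c..}"
      proof (intro equalityI subsetI)
        fix x assume "x \<in> (\<Inter>n. A n)"
        then have "\<forall>n. c - 1 / real (Suc n) < x" by (auto simp: A_def)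
        show "x \<in> {c..}"
        proof (rule ccontr)
          assume "x \<notin> {c..}" then have "x < c" by simp
          then obtain n where "1 / real (Suc n) < c - x" using reals_Archimedean[of "c - x"] by auto
            (metis inverse_eq_divide)
          moreover have "c - 1 / real (Suc n) < x" using \<open>\<forall>n. c - 1 / real (Suc n) < x\<close> by blast
          ultimately show False by linarith
        qed
      next
        fix x assume x: "x \<in> {c..}"
        have "\<And>n. c - 1 / real (Suc n) < x"
        proof -
          fix n have "0 < 1 / real (Suc n)" by (simp del: of_nat_Suc)
          moreover have "c \<le> x" using x by simp
          ultimately show "c - 1 / real (Suc n) < x" by linarith
        qed
        then show "x \<in> (\<Inter>n. A n)" by (simp add: A_def)
      qed
      have r1: "range A \<subseteq> sets \<mu>" "range A \<subseteq> sets \<nu>" using sm sn by (auto simp: A_def)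
      have l1: "(\<lambda>n. measure \<mu> (A n)) \<longlonglongrightarrow> measure \<mu> {c..}"
        using m.finite_Lim_measure_decseq[OF r1(1) dec] inter by simp
      have l2: "(\<lambda>n. measure \<nu> (A n)) \<longlonglongrightarrow> measure \<nu> {c..}"
        using n.finite_Lim_measure_decseq[OF r1(2) dec] inter by simp
      have "\<And>n. measure \<nu> (A n) \<le> measure \<mu> (A n)"
      proof -
        fix n from dom[of "c - 1 / real (Suc n)"] show "measure \<nu> (A n) \<le> measure \<mu> (A n)"
          unfolding A_def m.emeasure_eq_measure n.emeasure_eq_measure by (simp add: ennreal_le_iff)
      qed
      then have "measure \<nu> {c..} \<le> measure \<mu> {c..}"
        by (intro LIMSEQ_le[OF l2 l1]) auto
      then show ?thesis unfolding Ueq m.emeasure_eq_measure n.emeasure_eq_measure by (rule ennreal_leI)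
    qed
  qed
qed

definition upS :: "'i set \<Rightarrow> ('i \<Rightarrow> real) set \<Rightarrow> bool" where
  "upS F S \<longleftrightarrow> (\<forall>y\<in>S. \<forall>y'\<in>space (PiM F (\<lambda>_. borel)). (\<forall>m\<in>F. y m \<le> y' m) \<longrightarrow> y' \<in> S)"

lemma swap_one:
  fixes \<rho> \<rho>' :: "'i \<Rightarrow> real measure"
  assumes F: "finite F" "i \<in> F"
    and p: "\<And>m. prob_space (\<rho> m)" "\<And>m. prob_space (\<rho>' m)"
    and s: "\<And>m. sets (\<rho> m) = sets borel" "\<And>m. sets (\<rho>' m) = sets borel"
    and eq: "\<And>m. m \<noteq> i \<Longrightarrow> \<rho>' m = \<rho> m"
    and dom: "\<And>a. emeasure (\<rho>' i) {a<..} \<le> emeasure (\<rho> i) {a<..}"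
    and S: "S \<in> sets (PiM F (\<lambda>_. borel))" and up: "upS F S"
  shows "emeasure (PiM F \<rho>') S \<le> emeasure (PiM F \<rho>) S"
proof -
  define F0 where "F0 = F - {i}"
  have FF: "F = insert i F0" "i \<notin> F0" "finite F0" using F by (auto simp: F0_def)
  interpret P: product_prob_space \<rho> by (simp add: product_prob_space_def product_prob_space_axioms_def product_sigma_finite_def p prob_space_imp_sigma_finite)
  interpret P': product_prob_space \<rho>' by (simp add: product_prob_space_def product_prob_space_axioms_def product_sigma_finite_def p prob_space_imp_sigma_finite)
  have setsF: "\<And>\<sigma>. (\<And>m. sets (\<sigma> m) = sets borel) \<Longrightarrow> sets (PiM F \<sigma>) = sets (PiM F (\<lambda>_. borel))"
    by (rule sets_PiM_cong) auto
  have spF: "\<And>\<sigma> G. (\<And>m. sets (\<sigma> m) = sets borel) \<Longrightarrow> space (PiM G \<sigma>) = space (PiM G (\<lambda>_. borel::real measure))"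
    by (rule sets_eq_imp_space_eq, rule sets_PiM_cong) auto
  have ind: "\<And>\<sigma>. (\<And>m. sets (\<sigma> m) = sets borel) \<Longrightarrow> indicator S \<in> borel_measurable (PiM (insert i F0) \<sigma>)"
  proof -
    fix \<sigma> :: "'i \<Rightarrow> real measure" assume ss: "\<And>m. sets (\<sigma> m) = sets borel"
    have "S \<in> sets (PiM (insert i F0) \<sigma>)" unfolding FF(1)[symmetric] using S setsF[OF ss] by simp
    then show "indicator S \<in> borel_measurable (PiM (insert i F0) \<sigma>)" by simp
  qed
  have sec: "\<And>\<sigma> x. (\<And>m. sets (\<sigma> m) = sets borel) \<Longrightarrow> x \<in> space (PiM F0 \<sigma>) \<Longrightarrow>
      (\<integral>\<^sup>+ y. indicator S (x(i := y)) \<partial>\<sigma> i) = emeasure (\<sigma> i) {y. x(i := y) \<in> S}"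
  proof -
    fix \<sigma> :: "'i \<Rightarrow> real measure" and x assume ss: "\<And>m. sets (\<sigma> m) = sets borel" and x: "x \<in> space (PiM F0 \<sigma>)"
    have "(\<lambda>v. x(i := v)) \<in> measurable (\<sigma> i) (PiM (insert i F0) \<sigma>)"
      using measurable_component_update[OF x FF(2)] .
    moreover have "S \<in> sets (PiM (insert i F0) \<sigma>)" unfolding FF(1)[symmetric] using S setsF[OF ss] by simp
    ultimately have "(\<lambda>v. x(i := v)) -` S \<inter> space (\<sigma> i) \<in> sets (\<sigma> i)"
      by (rule measurable_sets)
    moreover have "space (\<sigma> i) = UNIV" using sets_eq_imp_space_eq[OF ss[of i]] by simp
    ultimately have "{y. x(i := y) \<in> S} \<in> sets (\<sigma> i)" by (simp add: vimage_def)
    then show "(\<integral>\<^sup>+ y. indicator S (x(i := y)) \<partial>\<sigma> i) = emeasure (\<sigma> i) {y. x(i := y) \<in> S}"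
    proof -
      assume Us: "{y. x(i := y) \<in> S} \<in> sets (\<sigma> i)"
      have "(\<lambda>y. indicator S (x(i := y)) :: ennreal) = indicator {y. x(i := y) \<in> S}" by (auto simp: indicator_def)
      then show ?thesis using nn_integral_indicator[OF Us] by simp
    qed
  qed
  have "emeasure (PiM F \<rho>') S = (\<integral>\<^sup>+ x. indicator S x \<partial>PiM (insert i F0) \<rho>')"
    using S setsF[OF s(2)] FF(1) by simp
  also have "\<dots> = (\<integral>\<^sup>+ x. (\<integral>\<^sup>+ y. indicator S (x(i := y)) \<partial>\<rho>' i) \<partial>PiM F0 \<rho>')"
    using P'.product_nn_integral_insert[OF FF(3) FF(2) ind[OF s(2)]] .
  also have "\<dots> = (\<integral>\<^sup>+ x. emeasure (\<rho>' i) {y. x(i := y) \<in> S} \<partial>PiM F0 \<rho>)"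
  proof -
    have "PiM F0 \<rho>' = PiM F0 \<rho>" using FF(2) eq by (intro PiM_cong) (simp, metis)
    moreover have "\<And>x. x \<in> space (PiM F0 \<rho>') \<Longrightarrow> (\<integral>\<^sup>+ y. indicator S (x(i := y)) \<partial>\<rho>' i) = emeasure (\<rho>' i) {y. x(i := y) \<in> S}"
      by (rule sec[of \<rho>']) (rule s(2))
    ultimately show ?thesis by (auto intro!: nn_integral_cong)
  qed
  also have "\<dots> \<le> (\<integral>\<^sup>+ x. emeasure (\<rho> i) {y. x(i := y) \<in> S} \<partial>PiM F0 \<rho>)"
  proof (rule nn_integral_mono)
    fix x assume x: "x \<in> space (PiM F0 \<rho>)"
    have xs: "x \<in> space (PiM F0 (\<lambda>_. borel::real measure))" using x spF[of \<rho>, OF s(1)] by simp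
    have "(\<lambda>v. x(i := v)) \<in> measurable borel (PiM (insert i F0) (\<lambda>_. borel))"
      using measurable_component_update[OF xs FF(2)] .
    moreover have "S \<in> sets (PiM (insert i F0) (\<lambda>_. borel::real measure))" unfolding FF(1)[symmetric] using S by simp
    ultimately have "(\<lambda>v. x(i := v)) -` S \<inter> space borel \<in> sets borel"
      by (rule measurable_sets)
    then have U: "{y. x(i := y) \<in> S} \<in> sets borel" by (simp add: vimage_def)
    show "emeasure (\<rho>' i) {y. x(i := y) \<in> S} \<le> emeasure (\<rho> i) {y. x(i := y) \<in> S}"
    proof (rule upset_dom[OF p(1) p(2) s(1) s(2) dom U])
      fix a b assume a: "a \<in> {y. x(i := y) \<in> S}" and ab: "a \<le> b"
      have "x(i := b) \<in> space (PiM (insert i F0) (\<lambda>_. borel::real measure))"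
        using measurable_space[OF measurable_component_update[OF xs FF(2)], of b] by simp
      then show "b \<in> {y. x(i := y) \<in> S}"
        using up a ab FF(1) unfolding upS_def by (auto dest!: bspec[of _ _ "x(i:=a)"])
    qed
  qed
  also have "\<dots> = (\<integral>\<^sup>+ x. (\<integral>\<^sup>+ y. indicator S (x(i := y)) \<partial>\<rho> i) \<partial>PiM F0 \<rho>)"
    using sec[of \<rho>, OF s(1)] by (auto intro!: nn_integral_cong)
  also have "\<dots> = (\<integral>\<^sup>+ x. indicator S x \<partial>PiM (insert i F0) \<rho>)"
    using P.product_nn_integral_insert[OF FF(3) FF(2) ind[OF s(1)]] by simp
  also have "\<dots> = emeasure (PiM F \<rho>) S"
    using S setsF[OF s(1)] FF(1) by simp
  finally show ?thesis .
qed

lemma prod_dom: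
  fixes \<mu> \<nu> :: "'i \<Rightarrow> real measure"
  assumes F: "finite F"
    and p: "\<And>m. prob_space (\<mu> m)" "\<And>m. prob_space (\<nu> m)"
    and s: "\<And>m. sets (\<mu> m) = sets borel" "\<And>m. sets (\<nu> m) = sets borel"
    and dom: "\<And>m a. m \<in> F \<Longrightarrow> emeasure (\<nu> m) {a<..} \<le> emeasure (\<mu> m) {a<..}"
    and S: "S \<in> sets (PiM F (\<lambda>_. borel))" and up: "upS F S"
  shows "emeasure (PiM F \<nu>) S \<le> emeasure (PiM F \<mu>) S"
proof -
  define mix where "mix G m = (if m \<in> G then \<nu> m else \<mu> m)" for G m
  have "G \<subseteq> F \<Longrightarrow> emeasure (PiM F (mix G)) S \<le> emeasure (PiM F \<mu>) S" for G
  proof (induction G rule: infinite_finite_induct)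
    case (infinite G) then show ?case using F finite_subset by blast
  next
    case empty then show ?case by (simp add: mix_def)
  next
    case (insert i G)
    have "emeasure (PiM F (mix (insert i G))) S \<le> emeasure (PiM F (mix G)) S"
    proof (rule swap_one[OF F])
      show "i \<in> F" using insert by auto
      show "\<And>m. prob_space (mix G m)" "\<And>m. prob_space (mix (insert i G) m)" using p by (auto simp: mix_def)
      show "\<And>m. sets (mix G m) = sets borel" "\<And>m. sets (mix (insert i G) m) = sets borel" using s by (auto simp: mix_def)
      show "\<And>m. m \<noteq> i \<Longrightarrow> mix (insert i G) m = mix G m" by (auto simp: mix_def)
      show "\<And>a. emeasure (mix (insert i G) i) {a<..} \<le> emeasure (mix G i) {a<..}"
        using dom insert by (auto simp: mix_def)
    qed fact+
    also have "\<dots> \<le> emeasure (PiM F \<mu>) S" using insert by auto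
    finally show ?case .
  qed
  from this[of F] have "emeasure (PiM F (mix F)) S \<le> emeasure (PiM F \<mu>) S" by simp
  moreover have "PiM F (mix F) = PiM F \<nu>" by (rule PiM_cong) (auto simp: mix_def)
  ultimately show ?thesis by simp
qed

lemma law_dom:
  fixes X :: "'a \<Rightarrow> 'x" and Z1 Z2 :: "'i \<Rightarrow> 'a \<Rightarrow> real"
  assumes PM: "prob_space M" and F: "finite F" "F \<noteq> {}"
    and Zm1: "\<And>m. Z1 m \<in> borel_measurable M" and Zm2: "\<And>m. Z2 m \<in> borel_measurable M"
    and X: "X \<in> measurable M MX"
    and i1: "\<And>A B. A \<in> sets MX \<Longrightarrow> B \<in> sets (PiM F (\<lambda>_. borel)) \<Longrightarrow>
      measure M {w\<in>space M. X w \<in> A \<and> (\<lambda>m\<in>F. Z1 m w) \<in> B} = measure M {w\<in>space M. X w \<in> A} * measure M {w\<in>space M. (\<lambda>m\<in>F. Z1 m w) \<in> B}"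
    and i2: "\<And>A B. A \<in> sets MX \<Longrightarrow> B \<in> sets (PiM F (\<lambda>_. borel)) \<Longrightarrow>
      measure M {w\<in>space M. X w \<in> A \<and> (\<lambda>m\<in>F. Z2 m w) \<in> B} = measure M {w\<in>space M. X w \<in> A} * measure M {w\<in>space M. (\<lambda>m\<in>F. Z2 m w) \<in> B}"
    and v1: "prob_space.indep_vars M (\<lambda>_. borel) Z1 F"
    and v2: "prob_space.indep_vars M (\<lambda>_. borel) Z2 F"
    and dom: "\<And>m a. m \<in> F \<Longrightarrow> emeasure M {w\<in>space M. a < Z2 m w} \<le> emeasure M {w\<in>space M. a < Z1 m w}"
    and C: "C \<in> sets (MX \<Otimes>\<^sub>M PiM F (\<lambda>_. borel))"
    and up: "\<And>x. upS F (Pair x -` C)"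
  shows "emeasure M {w\<in>space M. (X w, \<lambda>m\<in>F. Z2 m w) \<in> C} \<le> emeasure M {w\<in>space M. (X w, \<lambda>m\<in>F. Z1 m w) \<in> C}"
proof -
  interpret prob_space M by fact
  define \<mu> where "\<mu> m = distr M borel (Z1 m)" for m
  define \<nu> where "\<nu> m = distr M borel (Z2 m)" for m
  have pmu: "\<And>m. prob_space (\<mu> m)" "\<And>m. prob_space (\<nu> m)"
    unfolding \<mu>_def \<nu>_def by (auto intro!: prob_space_distr Zm1 Zm2)
  have smu: "\<And>m. sets (\<mu> m) = sets borel" "\<And>m. sets (\<nu> m) = sets borel" by (auto simp: \<mu>_def \<nu>_def)
  have law: "emeasure M {w\<in>space M. (X w, \<lambda>m\<in>F. Z m w) \<in> C} =
      (\<integral>\<^sup>+x. emeasure (PiM F (\<lambda>m. distr M borel (Z m))) (Pair x -` C) \<partial>distr M MX X)"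
    if Zm: "\<And>m. Z m \<in> borel_measurable M"
      and iv: "\<And>A B. A \<in> sets MX \<Longrightarrow> B \<in> sets (PiM F (\<lambda>_. borel)) \<Longrightarrow>
      measure M {w\<in>space M. X w \<in> A \<and> (\<lambda>m\<in>F. Z m w) \<in> B} = measure M {w\<in>space M. X w \<in> A} * measure M {w\<in>space M. (\<lambda>m\<in>F. Z m w) \<in> B}"
      and ivs: "indep_vars (\<lambda>_. borel) Z F" for Z
  proof -
    have ZF: "(\<lambda>w. \<lambda>m\<in>F. Z m w) \<in> measurable M (PiM F (\<lambda>_. borel))"
      by (rule measurable_restrict) (rule Zm)
    have XZ: "(\<lambda>w. (X w, \<lambda>m\<in>F. Z m w)) \<in> measurable M (MX \<Otimes>\<^sub>M PiM F (\<lambda>_. borel))"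
      using X ZF by (rule measurable_Pair)
    have "emeasure M {w\<in>space M. (X w, \<lambda>m\<in>F. Z m w) \<in> C} =
        emeasure (distr M (MX \<Otimes>\<^sub>M PiM F (\<lambda>_. borel)) (\<lambda>w. (X w, \<lambda>m\<in>F. Z m w))) C"
      using XZ C by (subst emeasure_distr) (auto intro!: arg_cong[where f="emeasure M"])
    also have "distr M (MX \<Otimes>\<^sub>M PiM F (\<lambda>_. borel)) (\<lambda>w. (X w, \<lambda>m\<in>F. Z m w)) =
        distr M MX X \<Otimes>\<^sub>M distr M (PiM F (\<lambda>_. borel)) (\<lambda>w. \<lambda>m\<in>F. Z m w)"
    proof (rule pair_measure_eqI[symmetric])
      show "sigma_finite_measure (distr M MX X)" by (rule prob_space_imp_sigma_finite, rule prob_space_distr, rule X)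
      show "sigma_finite_measure (distr M (PiM F (\<lambda>_. borel)) (\<lambda>w. \<lambda>m\<in>F. Z m w))"
        by (rule prob_space_imp_sigma_finite, rule prob_space_distr, rule ZF)
      show "sets (distr M MX X \<Otimes>\<^sub>M distr M (PiM F (\<lambda>_. borel)) (\<lambda>w. \<lambda>m\<in>F. Z m w)) =
          sets (distr M (MX \<Otimes>\<^sub>M PiM F (\<lambda>_. borel)) (\<lambda>w. (X w, \<lambda>m\<in>F. Z m w)))" by simp
      fix A B assume A: "A \<in> sets (distr M MX X)" and B: "B \<in> sets (distr M (PiM F (\<lambda>_. borel)) (\<lambda>w. \<lambda>m\<in>F. Z m w))"
      have A': "A \<in> sets MX" and B': "B \<in> sets (PiM F (\<lambda>_. borel))" using A B by auto
      have "emeasure (distr M (MX \<Otimes>\<^sub>M PiM F (\<lambda>_. borel)) (\<lambda>w. (X w, \<lambda>m\<in>F. Z m w))) (A \<times> B) =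
          emeasure M {w\<in>space M. X w \<in> A \<and> (\<lambda>m\<in>F. Z m w) \<in> B}"
        using A' B' XZ by (subst emeasure_distr) (auto intro!: arg_cong[where f="emeasure M"])
      also have "\<dots> = ennreal (measure M {w\<in>space M. X w \<in> A} * measure M {w\<in>space M. (\<lambda>m\<in>F. Z m w) \<in> B})"
        by (simp add: emeasure_eq_measure iv[OF A' B'])
      also have "\<dots> = emeasure M {w\<in>space M. X w \<in> A} * emeasure M {w\<in>space M. (\<lambda>m\<in>F. Z m w) \<in> B}"
        by (simp add: emeasure_eq_measure ennreal_mult)
      also have "\<dots> = emeasure (distr M MX X) A * emeasure (distr M (PiM F (\<lambda>_. borel)) (\<lambda>w. \<lambda>m\<in>F. Z m w)) B"
        using A' B' X ZF by (simp add: emeasure_distr vimage_def Int_def conj_commute)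
      finally show "emeasure (distr M MX X) A * emeasure (distr M (PiM F (\<lambda>_. borel)) (\<lambda>w. \<lambda>m\<in>F. Z m w)) B =
          emeasure (distr M (MX \<Otimes>\<^sub>M PiM F (\<lambda>_. borel)) (\<lambda>w. (X w, \<lambda>m\<in>F. Z m w))) (A \<times> B)" by simp
    qed
    also have "distr M (PiM F (\<lambda>_. borel)) (\<lambda>w. \<lambda>m\<in>F. Z m w) = PiM F (\<lambda>m. distr M borel (Z m))"
      using indep_vars_iff_distr_eq_PiM[OF F(2), where M'="\<lambda>_. borel" and X=Z] Zm ivs by simp
    also have "emeasure (distr M MX X \<Otimes>\<^sub>M PiM F (\<lambda>m. distr M borel (Z m))) C =
        (\<integral>\<^sup>+x. emeasure (PiM F (\<lambda>m. distr M borel (Z m))) (Pair x -` C) \<partial>distr M MX X)"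
    proof -
      interpret Pp: prob_space "PiM F (\<lambda>m. distr M borel (Z m))"
        by (rule prob_space_PiM) (auto intro!: prob_space_distr Zm)
      have "sets (distr M MX X \<Otimes>\<^sub>M PiM F (\<lambda>m. distr M borel (Z m))) = sets (MX \<Otimes>\<^sub>M PiM F (\<lambda>_. borel))"
        by (intro sets_pair_measure_cong sets_PiM_cong) auto
      then show ?thesis using C by (intro Pp.emeasure_pair_measure_alt) simp
    qed
    finally show ?thesis .
  qed
  have "emeasure M {w\<in>space M. (X w, \<lambda>m\<in>F. Z2 m w) \<in> C} =
      (\<integral>\<^sup>+x. emeasure (PiM F \<nu>) (Pair x -` C) \<partial>distr M MX X)"
    unfolding \<nu>_def by (rule law) (fact Zm2 i2 v2)+
  also have "\<dots> \<le> (\<integral>\<^sup>+x. emeasure (PiM F \<mu>) (Pair x -` C) \<partial>distr M MX X)"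
  proof (rule nn_integral_mono)
    fix x
    show "emeasure (PiM F \<nu>) (Pair x -` C) \<le> emeasure (PiM F \<mu>) (Pair x -` C)"
    proof (rule prod_dom[OF F(1) pmu smu])
      show "Pair x -` C \<in> sets (PiM F (\<lambda>_. borel))" using C by (rule sets_Pair1)
      show "upS F (Pair x -` C)" by (rule up)
      fix m a assume m: "m \<in> F"
      have e: "\<And>Z::'a \<Rightarrow> real. Z \<in> borel_measurable M \<Longrightarrow> emeasure (distr M borel Z) {a<..} = emeasure M {w\<in>space M. a < Z w}"
        by (subst emeasure_distr) (auto intro!: arg_cong[where f="emeasure M"] borel_open)
      show "emeasure (\<nu> m) {a<..} \<le> emeasure (\<mu> m) {a<..}"
        unfolding \<mu>_def \<nu>_def e[OF Zm1] e[OF Zm2] using dom[OF m] .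
    qed
  qed
  also have "\<dots> = emeasure M {w\<in>space M. (X w, \<lambda>m\<in>F. Z1 m w) \<in> C}"
    unfolding \<mu>_def by (rule law[symmetric]) (fact Zm1 i1 v1)+
  finally show ?thesis .
qed

definition Zf :: "nat \<Rightarrow> (nat \<Rightarrow> nat \<Rightarrow> 'a \<Rightarrow> real) \<Rightarrow> (nat \<Rightarrow> nat \<Rightarrow> 'a \<Rightarrow> real) \<Rightarrow> nat \<times> nat \<times> bool \<Rightarrow> 'a \<Rightarrow> real" where
  "Zf K h g m w = (if m \<in> mark_index K then (case m of (k, i, b) \<Rightarrow> if b then h k i w else - g k i w) else 0)"

lemma Zf_pre:
  assumes m: "m \<in> mark_index K" and A: "A \<in> sets borel"
  shows "Zf K h g m -` A \<inter> space M \<in> sets (vimage_algebra (space M) (mark_family h g m) borel)"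
proof -
  obtain k i b where mm: "m = (k, i, b)" by (cases m) auto
  show ?thesis
  proof (cases b)
    case True
    then have "Zf K h g m -` A \<inter> space M = mark_family h g m -` A \<inter> space M"
      using m by (auto simp: Zf_def mark_family_def mm)
    then show ?thesis using A by (simp add: in_vimage_algebra)
  next
    case False
    have A': "uminus -` A \<in> sets (borel :: real measure)" using A by (rule measurable_sets_borel[OF borel_measurable_uminus[OF measurable_ident_sets[OF refl]]])
    have "Zf K h g m -` A \<inter> space M = mark_family h g m -` (uminus -` A) \<inter> space M"
      using m False by (auto simp: Zf_def mark_family_def mm)
    then show ?thesis using A' by (simp add: in_vimage_algebra)
  qed
qed

lemma marks_meas:
  assumes "marks M K pt N D S h g"
  shows "Zf K h g m \<in> borel_measurable M"
proof (cases "m \<in> mark_index K")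
  case False then have "Zf K h g m = (\<lambda>_. 0)" by (simp add: Zf_def fun_eq_iff)
  then show ?thesis by simp
next
  case True
  obtain k i b where mm: "m = (k, i, b)" by (cases m) auto
  have k: "k \<in> {1..K}" using True by (auto simp: mark_index_def mm)
  have h: "h k i \<in> borel_measurable M" and g: "g k i \<in> borel_measurable M"
  proof -
    have "distributed M lborel (h k i) (gamma_density (D k))" "distributed M lborel (g k i) (gamma_density (S k))"
      using assms k unfolding marks_def by blast+
    then show "h k i \<in> borel_measurable M" "g k i \<in> borel_measurable M"
      by (auto dest: distributed_measurable)
  qed
  have "Zf K h g m = (if b then h k i else (\<lambda>w. - g k i w))" using True by (auto simp: Zf_def mm fun_eq_iff)
  then show ?thesis using h g by simp
qed

lemma marks_vars:
  assumes PM: "prob_space M" and mk: "marks M K pt N D S h g" and F: "F \<subseteq> mark_index K"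
  shows "prob_space.indep_vars M (\<lambda>_. borel) (Zf K h g) F"
proof -
  interpret prob_space M by fact
  let ?E = "\<lambda>j. case j of None \<Rightarrow> sets (vimage_algebra (space M) (proc K pt N) (proc_space K))
                      | Some m \<Rightarrow> sets (vimage_algebra (space M) (mark_family h g m) borel)"
  have ind: "indep_sets ?E (insert None (Some ` mark_index K))" using mk by (simp add: marks_def)
  have ind2: "indep_sets ?E (Some ` F)" by (rule indep_sets_mono_index[OF _ ind]) (use F in auto)
  show ?thesis unfolding indep_vars_def2
  proof safe
    fix m assume "m \<in> F" show "random_variable borel (Zf K h g m)" using marks_meas[OF mk] by simp
  next
    show "indep_sets (\<lambda>i. {Zf K h g i -` A \<inter> space M |A. A \<in> sets borel}) F"
    proof (rule indep_setsI)
      fix i assume "i \<in> F"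
      then show "{Zf K h g i -` A \<inter> space M |A. A \<in> sets borel} \<subseteq> events"
        using marks_meas[OF mk, of i] by (auto)
    next
      fix A J assume J: "J \<noteq> {}" "J \<subseteq> F" "finite J" and A: "\<forall>j\<in>J. A j \<in> {Zf K h g j -` A \<inter> space M |A. A \<in> sets borel}"
      define A' where "A' j = A (the j)" for j
      have "prob (\<Inter>j\<in>Some ` J. A' j) = (\<Prod>j\<in>Some ` J. prob (A' j))"
      proof (rule indep_setsD[OF ind2])
        show "Some ` J \<subseteq> Some ` F" "Some ` J \<noteq> {}" "finite (Some ` J)" using J by auto
        show "\<forall>j\<in>Some ` J. A' j \<in> ?E j"
        proof
          fix j assume "j \<in> Some ` J"
          then obtain m where m: "j = Some m" "m \<in> J" by auto
          then obtain B where B: "A m = Zf K h g m -` B \<inter> space M" "B \<in> sets borel" using A by blast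
          have "m \<in> mark_index K" using m J F by auto
          from Zf_pre[OF this B(2), of h g M] have "A m \<in> ?E (Some m)" using B(1) by simp
          then show "A' j \<in> ?E j" using m by (simp add: A'_def)
        qed
      qed
      moreover have "(\<Inter>j\<in>Some ` J. A' j) = (\<Inter>j\<in>J. A j)" by (auto simp: A'_def)
      moreover have "(\<Prod>j\<in>Some ` J. prob (A' j)) = (\<Prod>j\<in>J. prob (A j))"
        by (subst prod.reindex) (auto simp: A'_def)
      ultimately show "prob (\<Inter>j\<in>J. A j) = (\<Prod>j\<in>J. prob (A j))" by simp
    qed
  qed
qed

lemma marks_pair:
  assumes PM: "prob_space M" and mk: "marks M K pt N D S h g" and F: "F \<subseteq> mark_index K"
    and X: "proc K pt N \<in> measurable M (proc_space K)"
    and A: "A \<in> sets (proc_space K)" and B: "B \<in> sets (PiM F (\<lambda>_. borel))"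
  shows "measure M {w\<in>space M. proc K pt N w \<in> A \<and> (\<lambda>m\<in>F. Zf K h g m w) \<in> B} =
    measure M {w\<in>space M. proc K pt N w \<in> A} * measure M {w\<in>space M. (\<lambda>m\<in>F. Zf K h g m w) \<in> B}"
proof -
  interpret prob_space M by fact
  define E where "E = (\<lambda>j. case j of None \<Rightarrow> sets (vimage_algebra (space M) (proc K pt N) (proc_space K))
                      | Some m \<Rightarrow> sets (vimage_algebra (space M) (mark_family h g m) borel))"
  have ind: "indep_sets E (insert None (Some ` mark_index K))" using mk by (simp add: marks_def E_def)
  define I where "I b = (if b then {None} else Some ` F)" for b
  have ind2: "indep_sets E (\<Union>b\<in>UNIV. I b)"
    by (rule indep_sets_mono_index[OF _ ind]) (use F in \<open>auto simp: I_def\<close>)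
  have Ist: "\<And>i. Int_stable (E i)"
    by (auto simp: E_def Int_stable_def split: option.splits intro: sets.Int)
  have disj: "disjoint_family_on I UNIV" by (auto simp: disjoint_family_on_def I_def)
  have ind3: "indep_sets (\<lambda>b. sigma_sets (space M) (\<Union>i\<in>I b. E i)) UNIV"
    by (rule indep_sets_collect_sigma[OF ind2 _ disj]) (rule Ist)
  define Nm where "Nm = sigma (space M) (\<Union>i\<in>I False. E i)"
  have gen: "(\<Union>i\<in>I False. E i) \<subseteq> Pow (space M)"
    by (auto simp: I_def E_def) (metis sets.sets_into_space space_vimage_algebra subsetD)
  have sN: "sets Nm = sigma_sets (space M) (\<Union>i\<in>I False. E i)" unfolding Nm_def using gen by (rule sets_measure_of)
  have spN: "space Nm = space M" unfolding Nm_def using gen by (rule space_measure_of)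
  have ZN: "Zf K h g m \<in> measurable Nm borel" if m: "m \<in> F" for m
  proof (rule measurableI)
    fix x assume "x \<in> space Nm" then show "Zf K h g m x \<in> space borel" by simp
  next
    fix A assume "A \<in> sets (borel :: real measure)"
    then have "Zf K h g m -` A \<inter> space M \<in> E (Some m)" using Zf_pre[of m K A h g M] m F by (auto simp: E_def)
    then show "Zf K h g m -` A \<inter> space Nm \<in> sets Nm" unfolding sN spN using m
      by (auto simp: I_def intro!: sigma_sets.Basic)
  qed
  have ZFN: "(\<lambda>w. \<lambda>m\<in>F. Zf K h g m w) \<in> measurable Nm (PiM F (\<lambda>_. borel))"
    by (rule measurable_restrict) (rule ZN)
  have b1: "(\<lambda>w. \<lambda>m\<in>F. Zf K h g m w) -` B \<inter> space M \<in> sigma_sets (space M) (\<Union>i\<in>I False. E i)"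
    using measurable_sets[OF ZFN B] unfolding sN spN .
  have a1: "proc K pt N -` A \<inter> space M \<in> sigma_sets (space M) (\<Union>i\<in>I True. E i)"
    using A by (auto simp: I_def E_def intro!: sigma_sets.Basic in_vimage_algebra)
  define C where "C b = (if b then proc K pt N -` A \<inter> space M else (\<lambda>w. \<lambda>m\<in>F. Zf K h g m w) -` B \<inter> space M)" for b
  have "prob (\<Inter>b\<in>UNIV. C b) = (\<Prod>b\<in>UNIV. prob (C b))"
    by (rule indep_setsD[OF ind3]) (use a1 b1 in \<open>auto simp: C_def\<close>)
  moreover have "(\<Inter>b\<in>UNIV. C b) = {w\<in>space M. proc K pt N w \<in> A \<and> (\<lambda>m\<in>F. Zf K h g m w) \<in> B}"
    by (auto simp: C_def UNIV_bool)
  moreover have "(\<Prod>b\<in>UNIV. prob (C b)) = measure M {w\<in>space M. proc K pt N w \<in> A} * measure M {w\<in>space M. (\<lambda>m\<in>F. Zf K h g m w) \<in> B}"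
    by (simp add: C_def UNIV_bool vimage_def Int_def conj_commute)
  ultimately show ?thesis by simp
qed

type_synonym pst = "(nat \<Rightarrow> nat \<Rightarrow> loc) \<times> (nat \<Rightarrow> enat)"

definition sigf :: "(nat \<Rightarrow> real) \<Rightarrow> real \<Rightarrow> pst \<Rightarrow> (nat \<times> nat \<times> bool \<Rightarrow> real) \<Rightarrow> nat \<Rightarrow> nat \<Rightarrow> ennreal" where
  "sigf P \<alpha> x y k i = ennreal (P k * y (k, i, True) * norm (fst x k i) powr (- \<alpha>))"

definition itf :: "(nat \<Rightarrow> real) \<Rightarrow> real \<Rightarrow> pst \<Rightarrow> (nat \<times> nat \<times> bool \<Rightarrow> real) \<Rightarrow> nat \<Rightarrow> nat \<Rightarrow> nat \<Rightarrow> nat \<Rightarrow> ennreal" where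
  "itf P \<alpha> x y k i j l = (if enat l < snd x j \<and> fst x j l \<noteq> fst x k i
      then ennreal (P j * (- y (j, l, False)) * norm (fst x j l) powr (- \<alpha>)) else 0)"

definition intL :: "nat \<Rightarrow> (nat \<Rightarrow> real) \<Rightarrow> real \<Rightarrow> nat \<Rightarrow> pst \<Rightarrow> (nat \<times> nat \<times> bool \<Rightarrow> real) \<Rightarrow> nat \<Rightarrow> nat \<Rightarrow> ennreal" where
  "intL K P \<alpha> L x y k i = (\<Sum>j\<in>{1..K}. \<Sum>l<L. itf P \<alpha> x y k i j l)"

definition Dp :: "nat \<Rightarrow> (nat \<Rightarrow> real) \<Rightarrow> (nat \<Rightarrow> real) \<Rightarrow> real \<Rightarrow> nat \<times> nat \<times> rat \<Rightarrow> nat \<Rightarrow> pst \<Rightarrow> (nat \<times> nat \<times> bool \<Rightarrow> real) \<Rightarrow> bool" where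
  "Dp K P \<beta> \<alpha> e L x y = (case e of (k, i, r) \<Rightarrow> k \<in> {1..K} \<and> enat i < snd x k \<and>
      ennreal (\<beta> k) * intL K P \<alpha> L x y k i \<le> ennreal (of_rat r) \<and> ennreal (of_rat r) < sigf P \<alpha> x y k i)"

lemma ennreal_rat_between:
  assumes "a < ennreal s"
  shows "\<exists>r::rat. a \<le> ennreal (of_rat r) \<and> ennreal (of_rat r) < ennreal s"
proof -
  have "a \<noteq> \<top>" using assms by auto
  then obtain a' where a': "a = ennreal a'" "0 \<le> a'" by (cases a) auto
  then have "a' < s" using assms by (simp add: ennreal_less_iff)
  then obtain q where "q \<in> \<rat>" "a' < q" "q < s" using Rats_dense_in_real by blast
  then obtain r where r: "q = of_rat r" by (auto elim: Rats_cases)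
  have "a \<le> ennreal (of_rat r)" using a' \<open>a' < q\<close> r by (auto intro: ennreal_leI)
  moreover have "ennreal (of_rat r) < ennreal s" using \<open>a' < q\<close> \<open>q < s\<close> a' r by (intro ennreal_lessI) auto
  ultimately show ?thesis by blast
qed

lemma interference_SUP:
  assumes k: "k \<in> {1..K}"
  shows "interference K P \<alpha> pt N g k i w =
    (SUP L. intL K P \<alpha> L (proc K pt N w) (\<lambda>m. Zf K h g m w) k i)"
proof -
  let ?x = "proc K pt N w" and ?y = "\<lambda>m. Zf K h g m w"
  have t: "\<And>j l. j \<in> {1..K} \<Longrightarrow> itf P \<alpha> ?x ?y k i j l =
      (if enat l < N j w \<and> pt j l w \<noteq> pt k i w then ennreal (P j * g j l w * norm (pt j l w) powr (- \<alpha>)) else 0)"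
    using k by (auto simp: itf_def proc_def Zf_def mark_index_def)
  have "interference K P \<alpha> pt N g k i w = (\<Sum>j\<in>{1..K}. \<Sum>l. itf P \<alpha> ?x ?y k i j l)"
    unfolding interference_def by (intro sum.cong refl) (simp add: t)
  also have "\<dots> = (\<Sum>j\<in>{1..K}. SUP L. \<Sum>l<L. itf P \<alpha> ?x ?y k i j l)"
    by (simp add: suminf_eq_SUP)
  also have "\<dots> = (SUP L. \<Sum>j\<in>{1..K}. \<Sum>l<L. itf P \<alpha> ?x ?y k i j l)"
    by (rule ennreal_SUP_sum[symmetric]) (auto intro: incseq_sumI)
  finally show ?thesis by (simp add: intL_def)
qed

lemma cov_char:
  "covered K P \<beta> \<alpha> pt N h g w \<longleftrightarrow> (\<exists>e. \<forall>L. Dp K P \<beta> \<alpha> e L (proc K pt N w) (\<lambda>m. Zf K h g m w))"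
proof -
  let ?x = "proc K pt N w" and ?y = "\<lambda>m. Zf K h g m w"
  have S: "\<And>k i. k \<in> {1..K} \<Longrightarrow> sigf P \<alpha> ?x ?y k i = ennreal (P k * h k i w * norm (pt k i w) powr (- \<alpha>))"
    by (auto simp: sigf_def proc_def Zf_def mark_index_def)
  have Nk: "\<And>k. k \<in> {1..K} \<Longrightarrow> snd ?x k = N k w" by (auto simp: proc_def)
  have B: "\<And>k i c. k \<in> {1..K} \<Longrightarrow> ennreal (\<beta> k) * interference K P \<alpha> pt N g k i w \<le> c \<longleftrightarrow>
      (\<forall>L. ennreal (\<beta> k) * intL K P \<alpha> L ?x ?y k i \<le> c)"
    by (simp add: interference_SUP[where h=h] SUP_mult_left_ennreal SUP_le_iff)
  show ?thesis
  proof
    assume "covered K P \<beta> \<alpha> pt N h g w"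
    then obtain k i where k: "k \<in> {1..K}" "enat i < N k w"
      and lt: "ennreal (\<beta> k) * interference K P \<alpha> pt N g k i w < ennreal (P k * h k i w * norm (pt k i w) powr (- \<alpha>))"
      unfolding covered_def by blast
    obtain r :: rat where r: "ennreal (\<beta> k) * interference K P \<alpha> pt N g k i w \<le> ennreal (of_rat r)"
      "ennreal (of_rat r) < ennreal (P k * h k i w * norm (pt k i w) powr (- \<alpha>))"
      using ennreal_rat_between[OF lt] by blast
    have "\<forall>L. Dp K P \<beta> \<alpha> (k, i, r) L ?x ?y"
      using k r B[OF k(1)] S[OF k(1)] Nk[OF k(1)] by (auto simp: Dp_def)
    then show "\<exists>e. \<forall>L. Dp K P \<beta> \<alpha> e L ?x ?y" by blast
  next
    assume "\<exists>e. \<forall>L. Dp K P \<beta> \<alpha> e L ?x ?y"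
    then obtain k i r where D: "\<forall>L. Dp K P \<beta> \<alpha> (k, i, r) L ?x ?y" by (metis prod_cases3)
    then have k: "k \<in> {1..K}" "enat i < N k w" using Nk by (auto simp: Dp_def)
    have "ennreal (\<beta> k) * interference K P \<alpha> pt N g k i w \<le> ennreal (of_rat r)"
      using D B[OF k(1)] by (auto simp: Dp_def)
    moreover have "ennreal (of_rat r) < ennreal (P k * h k i w * norm (pt k i w) powr (- \<alpha>))"
      using D S[OF k(1)] by (auto simp: Dp_def)
    ultimately show "covered K P \<beta> \<alpha> pt N h g w" using k unfolding covered_def by (blast intro: le_less_trans)
  qed
qed

lemma union_inter_swap:
  fixes D :: "nat \<Rightarrow> nat \<Rightarrow> 'a set" and N :: nat
  assumes dec: "\<And>n. decseq (D n)"
  shows "(\<Union>n<N. \<Inter>L. D n L) = (\<Inter>L. \<Union>n<N. D n L)"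
proof (intro equalityI subsetI)
  fix x assume "x \<in> (\<Union>n<N. \<Inter>L. D n L)" then show "x \<in> (\<Inter>L. \<Union>n<N. D n L)" by blast
next
  fix x assume x: "x \<in> (\<Inter>L. \<Union>n<N. D n L)"
  show "x \<in> (\<Union>n<N. \<Inter>L. D n L)"
  proof (rule ccontr)
    assume "x \<notin> (\<Union>n<N. \<Inter>L. D n L)"
    then have "\<forall>n\<in>{..<N}. \<exists>L. x \<notin> D n L" by blast
    then obtain f where f: "\<And>n. n < N \<Longrightarrow> x \<notin> D n (f n)" by (metis lessThan_iff)
    define L0 where "L0 = Max (f ` {..<N})"
    have "\<And>n. n < N \<Longrightarrow> x \<notin> D n L0"
    proof -
      fix n assume n: "n < N"
      have "f n \<in> f ` {..<N}" using n by simp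
      then have "f n \<le> L0" unfolding L0_def by (intro Max_ge) simp_all
      then have "D n L0 \<subseteq> D n (f n)" using dec[of n] by (simp add: decseq_def)
      then show "x \<notin> D n L0" using f[OF n] by blast
    qed
    then show False using x by blast
  qed
qed

lemma lim_union_inter:
  fixes D1 D2 :: "nat \<Rightarrow> nat \<Rightarrow> 'a set"
  assumes FM: "finite_measure M"
    and s1: "\<And>n L. D1 n L \<in> sets M" and s2: "\<And>n L. D2 n L \<in> sets M"
    and d1: "\<And>n. decseq (D1 n)" and d2: "\<And>n. decseq (D2 n)"
    and le: "\<And>N L. measure M (\<Union>n<N. D2 n L) \<le> measure M (\<Union>n<N. D1 n L)"
  shows "measure M (\<Union>n. \<Inter>L. D2 n L) \<le> measure M (\<Union>n. \<Inter>L. D1 n L)"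
proof -
  interpret finite_measure M by fact
  have step: "(\<lambda>N. measure M (\<Union>n<N. \<Inter>L. D n L)) \<longlonglongrightarrow> measure M (\<Union>n. \<Inter>L. D n L)"
    and inner: "\<And>N. (\<lambda>L. measure M (\<Union>n<N. D n L)) \<longlonglongrightarrow> measure M (\<Union>n<N. \<Inter>L. D n L)"
    if s: "\<And>n L. D n L \<in> sets M" and d: "\<And>n. decseq (D n)" for D :: "nat \<Rightarrow> nat \<Rightarrow> 'a set"
  proof -
    show "\<And>N. (\<lambda>L. measure M (\<Union>n<N. D n L)) \<longlonglongrightarrow> measure M (\<Union>n<N. \<Inter>L. D n L)"
    proof -
      fix N
      have "(\<lambda>L. measure M (\<Union>n<N. D n L)) \<longlonglongrightarrow> measure M (\<Inter>L. \<Union>n<N. D n L)"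
      proof (rule finite_Lim_measure_decseq)
        show "range (\<lambda>L. \<Union>n<N. D n L) \<subseteq> sets M" using s by auto
        show "decseq (\<lambda>L. \<Union>n<N. D n L)" using d unfolding decseq_def by blast
      qed
      then show "(\<lambda>L. measure M (\<Union>n<N. D n L)) \<longlonglongrightarrow> measure M (\<Union>n<N. \<Inter>L. D n L)"
        by (simp add: union_inter_swap[OF d])
    qed
    have "(\<lambda>N. measure M (\<Union>n<N. \<Inter>L. D n L)) \<longlonglongrightarrow> measure M (\<Union>N. \<Union>n<N. \<Inter>L. D n L)"
      by (rule finite_Lim_measure_incseq) (use s in \<open>auto simp: incseq_def intro: less_le_trans\<close>)
    moreover have "(\<Union>N. \<Union>n<N. \<Inter>L. D n L) = (\<Union>n. \<Inter>L. D n L)" by blast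
    ultimately show "(\<lambda>N. measure M (\<Union>n<N. \<Inter>L. D n L)) \<longlonglongrightarrow> measure M (\<Union>n. \<Inter>L. D n L)" by simp
  qed
  have "\<And>N. measure M (\<Union>n<N. \<Inter>L. D2 n L) \<le> measure M (\<Union>n<N. \<Inter>L. D1 n L)"
    by (rule LIMSEQ_le[OF inner[OF s2 d2] inner[OF s1 d1]]) (use le in auto)
  then show ?thesis by (intro LIMSEQ_le[OF step[OF s2 d2] step[OF s1 d1]]) auto
qed

lemma intL_mono_L: "L \<le> L' \<Longrightarrow> intL K P \<alpha> L x y k i \<le> intL K P \<alpha> L' x y k i"
  unfolding intL_def by (intro sum_mono sum_mono2) auto

lemma Dp_dec: "L \<le> L' \<Longrightarrow> Dp K P \<beta> \<alpha> e L' x y \<Longrightarrow> Dp K P \<beta> \<alpha> e L x y"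
  unfolding Dp_def using intL_mono_L[of L L' K P \<alpha> x y]
  by (auto split: prod.splits) (metis (no_types) mult_left_mono order_trans zero_le)

lemma Dp_local:
  assumes "\<And>j l. j \<in> {1..K} \<Longrightarrow> l < L \<Longrightarrow> y (j, l, False) = y' (j, l, False)"
    and "k \<in> {1..K} \<Longrightarrow> y (k, i, True) = y' (k, i, True)"
  shows "Dp K P \<beta> \<alpha> (k, i, r) L x y = Dp K P \<beta> \<alpha> (k, i, r) L x y'"
proof -
  have "k \<in> {1..K} \<Longrightarrow> intL K P \<alpha> L x y k i = intL K P \<alpha> L x y' k i"
    unfolding intL_def itf_def using assms(1) by (intro sum.cong refl) auto
  moreover have "k \<in> {1..K} \<Longrightarrow> sigf P \<alpha> x y k i = sigf P \<alpha> x y' k i"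
    unfolding sigf_def using assms(2) by simp
  ultimately show ?thesis unfolding Dp_def by auto
qed

lemma Dp_mono:
  assumes P: "\<forall>k\<in>{1..K}. P k > 0 \<and> \<beta> k > 0"
    and le1: "\<And>j l. j \<in> {1..K} \<Longrightarrow> l < L \<Longrightarrow> y (j, l, False) \<le> y' (j, l, False)"
    and le2: "k \<in> {1..K} \<Longrightarrow> y (k, i, True) \<le> y' (k, i, True)"
    and D: "Dp K P \<beta> \<alpha> (k, i, r) L x y"
  shows "Dp K P \<beta> \<alpha> (k, i, r) L x y'"
proof -
  have k: "k \<in> {1..K}" using D by (simp add: Dp_def)
  have "intL K P \<alpha> L x y' k i \<le> intL K P \<alpha> L x y k i"
    unfolding intL_def itf_def
  proof (intro sum_mono)
    fix j l assume j: "j \<in> {1..K}" and l: "l \<in> {..<L}"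
    have "P j * (- y' (j, l, False)) * norm (fst x j l) powr - \<alpha> \<le> P j * (- y (j, l, False)) * norm (fst x j l) powr - \<alpha>"
    proof -
      have "0 < P j" using P j by blast
      then show ?thesis using le1[OF j] l by (intro mult_right_mono mult_left_mono) auto
    qed
    then show "(if enat l < snd x j \<and> fst x j l \<noteq> fst x k i then ennreal (P j * - y' (j, l, False) * norm (fst x j l) powr - \<alpha>) else 0)
        \<le> (if enat l < snd x j \<and> fst x j l \<noteq> fst x k i then ennreal (P j * - y (j, l, False) * norm (fst x j l) powr - \<alpha>) else 0)"
      by (auto intro: ennreal_leI)
  qed
  moreover have "sigf P \<alpha> x y k i \<le> sigf P \<alpha> x y' k i"
  proof -
    have "0 < P k" using P k by blast
    then show ?thesis unfolding sigf_def using le2[OF k] by (intro ennreal_leI mult_right_mono mult_left_mono) auto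
  qed
  ultimately show ?thesis using D unfolding Dp_def
    by (auto intro: order_trans[OF mult_left_mono] order.strict_trans2)
qed

lemma proc_meas:
  assumes "point_processes M K pt N"
  shows "proc K pt N \<in> measurable M (proc_space K)"
proof -
  have pt: "\<And>k i. k \<in> {1..K} \<Longrightarrow> pt k i \<in> borel_measurable M"
    and Nm: "\<And>k. k \<in> {1..K} \<Longrightarrow> N k \<in> measurable M (count_space UNIV)"
    using assms unfolding point_processes_def by auto
  have a: "(\<lambda>w. \<lambda>k\<in>{1..K}. \<lambda>i. pt k i w) \<in> measurable M (PiM {1..K} (\<lambda>_. PiM UNIV (\<lambda>_. borel)))"
  proof (rule measurable_restrict)
    fix k assume k: "k \<in> {1..K}"
    have "(\<lambda>w. \<lambda>i\<in>UNIV. pt k i w) \<in> measurable M (PiM UNIV (\<lambda>_. borel))"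
      by (rule measurable_restrict) (rule pt[OF k])
    then show "(\<lambda>w. \<lambda>i. pt k i w) \<in> measurable M (PiM UNIV (\<lambda>_. borel))" unfolding restrict_UNIV .
  qed
  have b: "(\<lambda>w. \<lambda>k\<in>{1..K}. N k w) \<in> measurable M (PiM {1..K} (\<lambda>_. count_space UNIV))"
    by (rule measurable_restrict) (rule Nm)
  have m: "(\<lambda>w. ((\<lambda>k\<in>{1..K}. \<lambda>i. pt k i w), (\<lambda>k\<in>{1..K}. N k w))) \<in> measurable M (proc_space K)"
    unfolding proc_space_def by (rule measurable_Pair[OF a b])
  have e: "proc K pt N = (\<lambda>w. ((\<lambda>k\<in>{1..K}. \<lambda>i. pt k i w), (\<lambda>k\<in>{1..K}. N k w)))"
    by (rule ext) (simp only: proc_def)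
  show ?thesis unfolding e by (rule m)
qed

lemma pred_setI: "{x \<in> space M. P x} \<in> sets M \<Longrightarrow> Measurable.pred M P"
  by (simp add: pred_def)

lemma Dp_meas:
  fixes F :: "(nat \<times> nat \<times> bool) set"
  assumes FB: "F = {1..K} \<times> {..<B} \<times> UNIV" and i: "i < B" and L: "L \<le> B"
  shows "Measurable.pred (proc_space K \<Otimes>\<^sub>M PiM F (\<lambda>_. borel)) (\<lambda>p. Dp K P \<beta> \<alpha> (k, i, r) L (fst p) (snd p))"
proof (cases "k \<in> {1..K}")
  case False
  then have "(\<lambda>p. Dp K P \<beta> \<alpha> (k, i, r) L (fst p) (snd p)) = (\<lambda>p. False)" by (auto simp: Dp_def)
  then show ?thesis by (simp only: pred_def) simp
next
  case k: True
  let ?S = "proc_space K \<Otimes>\<^sub>M PiM F (\<lambda>_. borel)"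
  have fc: "\<And>j l. j \<in> {1..K} \<Longrightarrow> (\<lambda>p. fst (fst p) j l) \<in> borel_measurable ?S"
  proof -
    fix j l assume j: "j \<in> {1..K}"
    have "(\<lambda>p. fst p j) \<in> measurable (PiM {1..K} (\<lambda>_. PiM UNIV (\<lambda>_. borel)) \<Otimes>\<^sub>M PiM {1..K} (\<lambda>_. count_space UNIV)) (PiM UNIV (\<lambda>_. borel))"
      using j by (intro measurable_compose[OF measurable_fst measurable_component_singleton])
    then have "(\<lambda>p. fst p j l) \<in> borel_measurable (proc_space K)"
      unfolding proc_space_def by (rule measurable_compose[OF _ measurable_component_singleton]) simp
    then show "(\<lambda>p. fst (fst p) j l) \<in> borel_measurable ?S"
      by (rule measurable_compose[OF measurable_fst])
  qed
  have sc: "\<And>j. j \<in> {1..K} \<Longrightarrow> (\<lambda>p. snd (fst p) j) \<in> measurable ?S (count_space UNIV)"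
  proof -
    fix j assume j: "j \<in> {1..K}"
    have "(\<lambda>p. snd p j) \<in> measurable (proc_space K) (count_space UNIV)"
      unfolding proc_space_def using j by (intro measurable_compose[OF measurable_snd measurable_component_singleton])
    then show "(\<lambda>p. snd (fst p) j) \<in> measurable ?S (count_space UNIV)"
      by (rule measurable_compose[OF measurable_fst])
  qed
  have yc: "\<And>m. m \<in> F \<Longrightarrow> (\<lambda>p. snd p m) \<in> borel_measurable ?S"
    by (intro measurable_compose[OF measurable_snd measurable_component_singleton])
  have lt: "\<And>j l. j \<in> {1..K} \<Longrightarrow> Measurable.pred ?S (\<lambda>p. enat l < snd (fst p) j)"
  proof -
    fix j l assume j: "j \<in> {1..K}"
    have "(\<lambda>p. snd (fst p) j) -` {e. enat l < e} \<inter> space ?S \<in> sets ?S"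
      using measurable_sets[OF sc[OF j], of "{e. enat l < e}"] by simp
    then show "Measurable.pred ?S (\<lambda>p. enat l < snd (fst p) j)" by (intro pred_setI) (simp add: vimage_def Int_def conj_commute)
  qed
  have neq: "\<And>j l. j \<in> {1..K} \<Longrightarrow> Measurable.pred ?S (\<lambda>p. fst (fst p) j l \<noteq> fst (fst p) k i)"
  proof -
    fix j l assume j: "j \<in> {1..K}"
    have "{p \<in> space ?S. fst (fst p) j l = fst (fst p) k i} \<in> sets ?S"
      by (rule measurable_equality_set[OF fc[OF j] fc[OF k]])
    then have "Measurable.pred ?S (\<lambda>p. fst (fst p) j l = fst (fst p) k i)" by (rule pred_setI)
    then show "Measurable.pred ?S (\<lambda>p. fst (fst p) j l \<noteq> fst (fst p) k i)" by (rule pred_intros_logic)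
  qed
  have itm: "\<And>j l. j \<in> {1..K} \<Longrightarrow> l < L \<Longrightarrow> (\<lambda>p. itf P \<alpha> (fst p) (snd p) k i j l) \<in> borel_measurable ?S"
  proof -
    fix j l assume j: "j \<in> {1..K}" and l: "l < L"
    have y: "(\<lambda>p. snd p (j, l, False)) \<in> borel_measurable ?S" using yc j l L FB by auto
    have c: "Measurable.pred ?S (\<lambda>p. enat l < snd (fst p) j \<and> fst (fst p) j l \<noteq> fst (fst p) k i)"
      using lt[OF j] neq[OF j] by (rule pred_intros_logic)
    have r: "(\<lambda>p. P j * (- snd p (j, l, False)) * norm (fst (fst p) j l) powr (- \<alpha>)) \<in> borel_measurable ?S"
      by (intro borel_measurable_times borel_measurable_const borel_measurable_uminus y powr_real_measurable
            measurable_compose[OF fc[OF j] borel_measurable_norm])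
    show "(\<lambda>p. itf P \<alpha> (fst p) (snd p) k i j l) \<in> borel_measurable ?S"
      unfolding itf_def
      by (rule measurable_If[OF measurable_compose[OF r measurable_ennreal] borel_measurable_const])
         (use c in \<open>simp add: pred_def\<close>)
  qed
  have im: "(\<lambda>p. intL K P \<alpha> L (fst p) (snd p) k i) \<in> borel_measurable ?S"
    unfolding intL_def by (intro borel_measurable_sum) (use itm in auto)
  have y: "(\<lambda>p. snd p (k, i, True)) \<in> borel_measurable ?S" using yc k i FB by auto
  have r: "(\<lambda>p. P k * snd p (k, i, True) * norm (fst (fst p) k i) powr (- \<alpha>)) \<in> borel_measurable ?S"
    by (intro borel_measurable_times borel_measurable_const y powr_real_measurable
            measurable_compose[OF fc[OF k] borel_measurable_norm])
  have sm: "(\<lambda>p. sigf P \<alpha> (fst p) (snd p) k i) \<in> borel_measurable ?S"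
    unfolding sigf_def by (rule measurable_compose[OF r measurable_ennreal])
  have m1: "(\<lambda>p. ennreal (\<beta> k) * intL K P \<alpha> L (fst p) (snd p) k i) \<in> borel_measurable ?S"
    by (rule borel_measurable_times_ennreal[OF borel_measurable_const im])
  have p1: "Measurable.pred ?S (\<lambda>p. ennreal (\<beta> k) * intL K P \<alpha> L (fst p) (snd p) k i \<le> ennreal (of_rat r))"
    unfolding pred_def by (rule borel_measurable_le[OF m1 borel_measurable_const])
  have p2: "Measurable.pred ?S (\<lambda>p. ennreal (of_rat r) < sigf P \<alpha> (fst p) (snd p) k i)"
    by (rule borel_measurable_pred_less[OF borel_measurable_const sm])
  have "Measurable.pred ?S (\<lambda>p. enat i < snd (fst p) k \<and> ennreal (\<beta> k) * intL K P \<alpha> L (fst p) (snd p) k i \<le> ennreal (of_rat r)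
      \<and> ennreal (of_rat r) < sigf P \<alpha> (fst p) (snd p) k i)"
    by (intro pred_intros_logic lt[OF k] p1 p2)
  then show ?thesis unfolding Dp_def using k by simp
qed

definition Dset :: "'a measure \<Rightarrow> nat \<Rightarrow> (nat \<Rightarrow> real) \<Rightarrow> (nat \<Rightarrow> real) \<Rightarrow> real \<Rightarrow> (nat \<Rightarrow> nat \<Rightarrow> 'a \<Rightarrow> loc) \<Rightarrow> (nat \<Rightarrow> 'a \<Rightarrow> enat) \<Rightarrow>
    (nat \<Rightarrow> nat \<Rightarrow> 'a \<Rightarrow> real) \<Rightarrow> (nat \<Rightarrow> nat \<Rightarrow> 'a \<Rightarrow> real) \<Rightarrow> nat \<Rightarrow> nat \<Rightarrow> 'a set" where
  "Dset M K P \<beta> \<alpha> pt N h g n L = {w \<in> space M. Dp K P \<beta> \<alpha> (from_nat n) L (proc K pt N w) (\<lambda>m. Zf K h g m w)}"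

definition Cset :: "nat \<Rightarrow> (nat \<Rightarrow> real) \<Rightarrow> (nat \<Rightarrow> real) \<Rightarrow> real \<Rightarrow> nat set \<Rightarrow> nat \<Rightarrow> (nat \<times> nat \<times> bool) set \<Rightarrow> (pst \<times> (nat \<times> nat \<times> bool \<Rightarrow> real)) set" where
  "Cset K P \<beta> \<alpha> I0 L F = {p \<in> space (proc_space K \<Otimes>\<^sub>M PiM F (\<lambda>_. borel)). \<exists>n\<in>I0. Dp K P \<beta> \<alpha> (from_nat n) L (fst p) (snd p)}"

lemma Cset_sets:
  assumes FB: "F = {1..K} \<times> {..<B} \<times> UNIV" and fin: "finite I0"
    and iB: "\<And>n. n \<in> I0 \<Longrightarrow> fst (snd (from_nat n :: nat \<times> nat \<times> rat)) < B" and L: "L \<le> B"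
  shows "Cset K P \<beta> \<alpha> I0 L F \<in> sets (proc_space K \<Otimes>\<^sub>M PiM F (\<lambda>_. borel))"
proof -
  have "Measurable.pred (proc_space K \<Otimes>\<^sub>M PiM F (\<lambda>_. borel)) (\<lambda>p. \<exists>n\<in>I0. Dp K P \<beta> \<alpha> (from_nat n) L (fst p) (snd p))"
  proof (rule pred_intros_finite(4)[OF fin])
    fix n assume n: "n \<in> I0"
    obtain k i r where e: "(from_nat n :: nat \<times> nat \<times> rat) = (k, i, r)" by (metis prod_cases3)
    show "Measurable.pred (proc_space K \<Otimes>\<^sub>M PiM F (\<lambda>_. borel)) (\<lambda>p. Dp K P \<beta> \<alpha> (from_nat n) L (fst p) (snd p))"
      unfolding e by (rule Dp_meas[OF FB _ L]) (use iB[OF n] e in simp)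
  qed
  then show ?thesis unfolding Cset_def pred_def .
qed

lemma Dset_rep:
  assumes FB: "F = {1..K} \<times> {..<B} \<times> UNIV"
    and iB: "\<And>n. n \<in> I0 \<Longrightarrow> fst (snd (from_nat n :: nat \<times> nat \<times> rat)) < B" and L: "L \<le> B"
    and X: "proc K pt N \<in> measurable M (proc_space K)"
    and Zm: "\<And>m. Zf K h g m \<in> borel_measurable M"
  shows "(\<Union>n\<in>I0. Dset M K P \<beta> \<alpha> pt N h g n L) = {w \<in> space M. (proc K pt N w, \<lambda>m\<in>F. Zf K h g m w) \<in> Cset K P \<beta> \<alpha> I0 L F}"
proof -
  have loc: "Dp K P \<beta> \<alpha> (from_nat n) L x y = Dp K P \<beta> \<alpha> (from_nat n) L x (\<lambda>m\<in>F. y m)" if n: "n \<in> I0" for n x y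
  proof -
    obtain k i r where e: "(from_nat n :: nat \<times> nat \<times> rat) = (k, i, r)" by (metis prod_cases3)
    have i: "i < B" using iB[OF n] e by simp
    show ?thesis unfolding e by (rule Dp_local) (use i L FB in auto)
  qed
  have sp: "\<And>w. w \<in> space M \<Longrightarrow> (proc K pt N w, \<lambda>m\<in>F. Zf K h g m w) \<in> space (proc_space K \<Otimes>\<^sub>M PiM F (\<lambda>_. borel))"
    using measurable_space[OF X] by (auto simp: space_pair_measure space_PiM)
  show ?thesis
  proof (intro equalityI subsetI)
    fix w assume "w \<in> (\<Union>n\<in>I0. Dset M K P \<beta> \<alpha> pt N h g n L)"
    then obtain n where n: "n \<in> I0" and w: "w \<in> space M" "Dp K P \<beta> \<alpha> (from_nat n) L (proc K pt N w) (\<lambda>m. Zf K h g m w)"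
      unfolding Dset_def by blast
    have "Dp K P \<beta> \<alpha> (from_nat n) L (proc K pt N w) (\<lambda>m\<in>F. Zf K h g m w)"
      using w(2) loc[OF n, of "proc K pt N w" "\<lambda>m. Zf K h g m w"] by simp
    then show "w \<in> {w \<in> space M. (proc K pt N w, \<lambda>m\<in>F. Zf K h g m w) \<in> Cset K P \<beta> \<alpha> I0 L F}"
      unfolding Cset_def using sp[OF w(1)] n w(1) by auto
  next
    fix w assume "w \<in> {w \<in> space M. (proc K pt N w, \<lambda>m\<in>F. Zf K h g m w) \<in> Cset K P \<beta> \<alpha> I0 L F}"
    then obtain n where n: "n \<in> I0" and w: "w \<in> space M" "Dp K P \<beta> \<alpha> (from_nat n) L (proc K pt N w) (\<lambda>m\<in>F. Zf K h g m w)"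
      unfolding Cset_def by auto
    have "Dp K P \<beta> \<alpha> (from_nat n) L (proc K pt N w) (\<lambda>m. Zf K h g m w)"
      using w(2) loc[OF n, of "proc K pt N w" "\<lambda>m. Zf K h g m w"] by simp
    then show "w \<in> (\<Union>n\<in>I0. Dset M K P \<beta> \<alpha> pt N h g n L)"
      unfolding Dset_def using n w(1) by auto
  qed
qed

theorem gen_dom:
  assumes PM: "prob_space M" and Pb: "\<forall>k\<in>{1..K}. P k > 0 \<and> \<beta> k > 0" and K1: "K \<ge> 1"
    and pp: "point_processes M K pt N"
    and m1: "marks M K pt N D1 S1 h1 g1" and m2: "marks M K pt N D2 S2 h2 g2"
    and dom: "\<And>m a. m \<in> mark_index K \<Longrightarrow> emeasure M {w\<in>space M. a < Zf K h2 g2 m w} \<le> emeasure M {w\<in>space M. a < Zf K h1 g1 m w}"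
  shows "coverage_prob M K P \<beta> \<alpha> pt N h2 g2 \<le> coverage_prob M K P \<beta> \<alpha> pt N h1 g1"
proof -
  interpret prob_space M by fact
  have X: "proc K pt N \<in> measurable M (proc_space K)" by (rule proc_meas[OF pp])
  define FF where "FF B = ({1..K} \<times> {..<B} \<times> UNIV :: (nat \<times> nat \<times> bool) set)" for B
  have FFm: "FF B \<subseteq> mark_index K" for B by (auto simp: FF_def mark_index_def)
  have FFne: "B > 0 \<Longrightarrow> FF B \<noteq> {}" for B using K1 by (auto simp: FF_def)
  have FFfin: "finite (FF B)" for B by (simp add: FF_def)
  have covset: "{w \<in> space M. covered K P \<beta> \<alpha> pt N h g w} = (\<Union>n. \<Inter>L. Dset M K P \<beta> \<alpha> pt N h g n L)" for h g
  proof -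
    have "\<And>w. covered K P \<beta> \<alpha> pt N h g w \<longleftrightarrow> (\<exists>n. \<forall>L. Dp K P \<beta> \<alpha> (from_nat n) L (proc K pt N w) (\<lambda>m. Zf K h g m w))"
    proof -
      fix w
      have ex: "\<And>Q. (\<exists>e::nat\<times>nat\<times>rat. Q e) \<longleftrightarrow> (\<exists>n. Q (from_nat n))" by (metis from_nat_to_nat)
      show "covered K P \<beta> \<alpha> pt N h g w \<longleftrightarrow> (\<exists>n. \<forall>L. Dp K P \<beta> \<alpha> (from_nat n) L (proc K pt N w) (\<lambda>m. Zf K h g m w))"
        unfolding cov_char by (rule ex)
    qed
    note cv = this
    show ?thesis
    proof (intro equalityI subsetI)
      fix w assume "w \<in> {w \<in> space M. covered K P \<beta> \<alpha> pt N h g w}"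
      then have w: "w \<in> space M" and "\<exists>n. \<forall>L. Dp K P \<beta> \<alpha> (from_nat n) L (proc K pt N w) (\<lambda>m. Zf K h g m w)"
        using cv by auto
      then obtain n where "\<forall>L. Dp K P \<beta> \<alpha> (from_nat n) L (proc K pt N w) (\<lambda>m. Zf K h g m w)" by blast
      then have "w \<in> (\<Inter>L. Dset M K P \<beta> \<alpha> pt N h g n L)" using w by (simp add: Dset_def)
      then show "w \<in> (\<Union>n. \<Inter>L. Dset M K P \<beta> \<alpha> pt N h g n L)" by (rule UN_I[OF UNIV_I])
    next
      fix w assume "w \<in> (\<Union>n. \<Inter>L. Dset M K P \<beta> \<alpha> pt N h g n L)"
      then obtain n where n: "\<And>L. w \<in> Dset M K P \<beta> \<alpha> pt N h g n L" by blast
      then have w: "w \<in> space M" unfolding Dset_def by blast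
      have "\<forall>L. Dp K P \<beta> \<alpha> (from_nat n) L (proc K pt N w) (\<lambda>m. Zf K h g m w)" using n unfolding Dset_def by blast
      then show "w \<in> {w \<in> space M. covered K P \<beta> \<alpha> pt N h g w}" using w cv by blast
    qed
  qed
  define bnd where "bnd I0 L = Suc L + (\<Sum>n\<in>I0. Suc (fst (snd (from_nat n :: nat \<times> nat \<times> rat))))" for I0 L
  have bndi: "finite I0 \<Longrightarrow> n \<in> I0 \<Longrightarrow> fst (snd (from_nat n :: nat \<times> nat \<times> rat)) < bnd I0 L" for I0 L n
  proof -
    assume "finite I0" "n \<in> I0"
    then have "Suc (fst (snd (from_nat n :: nat \<times> nat \<times> rat))) \<le> (\<Sum>n\<in>I0. Suc (fst (snd (from_nat n :: nat \<times> nat \<times> rat))))"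
      by (intro member_le_sum) auto
    then show ?thesis unfolding bnd_def by simp
  qed
  have bndL: "L \<le> bnd I0 L" for I0 L by (simp add: bnd_def)
  have rep: "(\<Union>n\<in>I0. Dset M K P \<beta> \<alpha> pt N h g n L) = {w \<in> space M. (proc K pt N w, \<lambda>m\<in>FF (bnd I0 L). Zf K h g m w) \<in> Cset K P \<beta> \<alpha> I0 L (FF (bnd I0 L))}"
    and Cs: "Cset K P \<beta> \<alpha> I0 L (FF (bnd I0 L)) \<in> sets (proc_space K \<Otimes>\<^sub>M PiM (FF (bnd I0 L)) (\<lambda>_. borel))"
    if "finite I0" and mk: "marks M K pt N D S h g" for I0 L h g D S
  proof -
    show "(\<Union>n\<in>I0. Dset M K P \<beta> \<alpha> pt N h g n L) = {w \<in> space M. (proc K pt N w, \<lambda>m\<in>FF (bnd I0 L). Zf K h g m w) \<in> Cset K P \<beta> \<alpha> I0 L (FF (bnd I0 L))}"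
      by (rule Dset_rep[OF FF_def bndi[OF that(1)] bndL X marks_meas[OF mk]])
    show "Cset K P \<beta> \<alpha> I0 L (FF (bnd I0 L)) \<in> sets (proc_space K \<Otimes>\<^sub>M PiM (FF (bnd I0 L)) (\<lambda>_. borel))"
      by (rule Cset_sets[OF FF_def that(1) bndi[OF that(1)] bndL])
  qed
  have Dsets: "Dset M K P \<beta> \<alpha> pt N h g n L \<in> events" if mk: "marks M K pt N D S h g" for n L h g D S
  proof -
    have eq: "(\<Union>n\<in>{n}. Dset M K P \<beta> \<alpha> pt N h g n L) = {w \<in> space M. (proc K pt N w, \<lambda>m\<in>FF (bnd {n} L). Zf K h g m w) \<in> Cset K P \<beta> \<alpha> {n} L (FF (bnd {n} L))}"
      by (rule rep[OF _ mk]) simp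
    have fm: "(\<lambda>w. (proc K pt N w, \<lambda>m\<in>FF (bnd {n} L). Zf K h g m w)) \<in> measurable M (proc_space K \<Otimes>\<^sub>M PiM (FF (bnd {n} L)) (\<lambda>_. borel))"
      by (intro measurable_Pair X measurable_restrict marks_meas[OF mk])
    have cs: "Cset K P \<beta> \<alpha> {n} L (FF (bnd {n} L)) \<in> sets (proc_space K \<Otimes>\<^sub>M PiM (FF (bnd {n} L)) (\<lambda>_. borel))"
      by (rule Cs[OF _ mk]) simp
    have "(\<lambda>w. (proc K pt N w, \<lambda>m\<in>FF (bnd {n} L). Zf K h g m w)) -` Cset K P \<beta> \<alpha> {n} L (FF (bnd {n} L)) \<inter> space M \<in> events"
      by (rule measurable_sets[OF fm cs])
    then have "{w \<in> space M. (proc K pt N w, \<lambda>m\<in>FF (bnd {n} L). Zf K h g m w) \<in> Cset K P \<beta> \<alpha> {n} L (FF (bnd {n} L))} \<in> events"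
      by (simp add: vimage_def Int_def conj_commute)
    then show ?thesis using eq by simp
  qed
  have decs: "decseq (Dset M K P \<beta> \<alpha> pt N h g n)" for h g n
    unfolding decseq_def Dset_def using Dp_dec by blast
  have le: "measure M (\<Union>n<N0. Dset M K P \<beta> \<alpha> pt N h2 g2 n L) \<le> measure M (\<Union>n<N0. Dset M K P \<beta> \<alpha> pt N h1 g1 n L)" for N0 L
  proof -
    let ?B = "bnd {..<N0} L"
    let ?F = "FF ?B"
    let ?C = "Cset K P \<beta> \<alpha> {..<N0} L ?F"
    have B0: "?B > 0" by (simp add: bnd_def)
    have "emeasure M {w \<in> space M. (proc K pt N w, \<lambda>m\<in>?F. Zf K h2 g2 m w) \<in> ?C} \<le>
          emeasure M {w \<in> space M. (proc K pt N w, \<lambda>m\<in>?F. Zf K h1 g1 m w) \<in> ?C}"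
    proof (rule law_dom[OF PM FFfin FFne[OF B0] marks_meas[OF m1] marks_meas[OF m2] X])
      show "\<And>A B. A \<in> sets (proc_space K) \<Longrightarrow> B \<in> sets (PiM ?F (\<lambda>_. borel)) \<Longrightarrow>
        measure M {w\<in>space M. proc K pt N w \<in> A \<and> (\<lambda>m\<in>?F. Zf K h1 g1 m w) \<in> B} = measure M {w\<in>space M. proc K pt N w \<in> A} * measure M {w\<in>space M. (\<lambda>m\<in>?F. Zf K h1 g1 m w) \<in> B}"
        by (rule marks_pair[OF PM m1 FFm X])
      show "\<And>A B. A \<in> sets (proc_space K) \<Longrightarrow> B \<in> sets (PiM ?F (\<lambda>_. borel)) \<Longrightarrow>
        measure M {w\<in>space M. proc K pt N w \<in> A \<and> (\<lambda>m\<in>?F. Zf K h2 g2 m w) \<in> B} = measure M {w\<in>space M. proc K pt N w \<in> A} * measure M {w\<in>space M. (\<lambda>m\<in>?F. Zf K h2 g2 m w) \<in> B}"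
        by (rule marks_pair[OF PM m2 FFm X])
      show "indep_vars (\<lambda>_. borel) (Zf K h1 g1) ?F" by (rule marks_vars[OF PM m1 FFm])
      show "indep_vars (\<lambda>_. borel) (Zf K h2 g2) ?F" by (rule marks_vars[OF PM m2 FFm])
      show "\<And>m a. m \<in> ?F \<Longrightarrow> emeasure M {w\<in>space M. a < Zf K h2 g2 m w} \<le> emeasure M {w\<in>space M. a < Zf K h1 g1 m w}"
        using dom FFm by blast
      show "?C \<in> sets (proc_space K \<Otimes>\<^sub>M PiM ?F (\<lambda>_. borel))" by (rule Cs[OF _ m1]) simp
      show "\<And>x. upS ?F (Pair x -` ?C)"
        unfolding upS_def
      proof (intro ballI impI)
        fix x y y' assume y: "y \<in> Pair x -` ?C" and y': "y' \<in> space (PiM ?F (\<lambda>_. borel))" and le: "\<forall>m\<in>?F. y m \<le> y' m"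
        from y obtain n where n: "n < N0" and sp: "(x, y) \<in> space (proc_space K \<Otimes>\<^sub>M PiM ?F (\<lambda>_. borel))"
          and D: "Dp K P \<beta> \<alpha> (from_nat n) L x y" unfolding Cset_def by auto
        obtain k i r where e: "(from_nat n :: nat \<times> nat \<times> rat) = (k, i, r)" by (metis prod_cases3)
        have i: "i < ?B" using bndi[of "{..<N0}" n L] n e by simp
        have L: "L \<le> ?B" by (rule bndL)
        have "Dp K P \<beta> \<alpha> (k, i, r) L x y'"
        proof (rule Dp_mono[OF Pb])
          show "\<And>j l. j \<in> {1..K} \<Longrightarrow> l < L \<Longrightarrow> y (j, l, False) \<le> y' (j, l, False)"
            using le L by (auto simp: FF_def)
          show "k \<in> {1..K} \<Longrightarrow> y (k, i, True) \<le> y' (k, i, True)"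
            using le i by (auto simp: FF_def)
          show "Dp K P \<beta> \<alpha> (k, i, r) L x y" using D e by simp
        qed
        moreover have "(x, y') \<in> space (proc_space K \<Otimes>\<^sub>M PiM ?F (\<lambda>_. borel))"
          using sp y' by (simp add: space_pair_measure)
        ultimately have "(x, y') \<in> space (proc_space K \<Otimes>\<^sub>M PiM ?F (\<lambda>_. borel)) \<and> (\<exists>n\<in>{..<N0}. Dp K P \<beta> \<alpha> (from_nat n) L x y')"
          using n e by (intro conjI bexI[of _ n]) simp_all
        then show "y' \<in> Pair x -` ?C" unfolding Cset_def by simp
      qed
    qed
    then show ?thesis
      using rep[OF _ m1, of "{..<N0}" L] rep[OF _ m2, of "{..<N0}" L]
      by (simp add: emeasure_eq_measure)
  qed
  have "measure M (\<Union>n. \<Inter>L. Dset M K P \<beta> \<alpha> pt N h2 g2 n L) \<le> measure M (\<Union>n. \<Inter>L. Dset M K P \<beta> \<alpha> pt N h1 g1 n L)"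
    by (rule lim_union_inter[OF finite_measure_axioms Dsets[OF m1] Dsets[OF m2] decs decs le])
  then show ?thesis unfolding coverage_prob_def covset .
qed

lemma gd_eq: "gamma_density n = (\<lambda>x. ennreal (erlang_density (n - 1) 1 x))"
  by (simp add: fun_eq_iff gamma_density_def)

lemma erl_le:
  assumes D: "distributed M lborel X (gamma_density n)"
  shows "emeasure M {w\<in>space M. X w \<le> b} = ennreal (erlang_CDF (n - 1) 1 b)"
proof -
  have Xm: "X \<in> borel_measurable M" using distributed_measurable[OF D] by simp
  have "emeasure M {w\<in>space M. X w \<le> b} = emeasure (distr M lborel X) {..b}"
    using Xm by (subst emeasure_distr) (auto intro!: arg_cong[where f="emeasure M"])
  also have "\<dots> = emeasure (density lborel (gamma_density n)) {..b}"
    unfolding distributed_distr_eq_density[OF D] ..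
  also have "\<dots> = ennreal (erlang_CDF (n - 1) 1 b)"
    unfolding gd_eq using emeasure_erlang_density[of 1 "n - 1" b] by simp
  finally show ?thesis .
qed

lemma erl_lt:
  assumes D: "distributed M lborel X (gamma_density n)"
  shows "emeasure M {w\<in>space M. X w < b} = ennreal (erlang_CDF (n - 1) 1 b)"
proof -
  have Xm: "X \<in> borel_measurable M" using distributed_measurable[OF D] by simp
  have "emeasure M {w\<in>space M. X w < b} = emeasure (distr M lborel X) {..<b}"
    using Xm by (subst emeasure_distr) (auto intro!: arg_cong[where f="emeasure M"])
  also have "\<dots> = emeasure (density lborel (gamma_density n)) {..<b}"
    unfolding distributed_distr_eq_density[OF D] ..
  also have "\<dots> = emeasure (density lborel (gamma_density n)) {..b}"
  proof -
    have gm: "gamma_density n \<in> borel_measurable lborel" unfolding gd_eq by simp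
    have "emeasure (density lborel (gamma_density n)) {..<b} = (\<integral>\<^sup>+x. gamma_density n x * indicator {..<b} x \<partial>lborel)"
      using gm by (simp add: emeasure_density)
    also have "\<dots> = (\<integral>\<^sup>+x. gamma_density n x * indicator {..b} x \<partial>lborel)"
      by (intro nn_integral_cong_AE eventually_mono[OF AE_lborel_singleton[of b]]) (auto split: split_indicator)
    also have "\<dots> = emeasure (density lborel (gamma_density n)) {..b}"
      using gm by (simp add: emeasure_density)
    finally show "emeasure (density lborel (gamma_density n)) {..<b} = emeasure (density lborel (gamma_density n)) {..b}" .
  qed
  also have "\<dots> = ennreal (erlang_CDF (n - 1) 1 b)"
    unfolding gd_eq using emeasure_erlang_density[of 1 "n - 1" b] by simp
  finally show ?thesis .
qed

lemma erl_gt: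
  assumes PM: "prob_space M" and D: "distributed M lborel X (gamma_density n)"
  shows "emeasure M {w\<in>space M. a < X w} = ennreal (1 - erlang_CDF (n - 1) 1 a)"
proof -
  interpret prob_space M by fact
  have Xm: "X \<in> borel_measurable M" using distributed_measurable[OF D] by simp
  have s: "{w\<in>space M. X w \<le> a} \<in> events" using Xm by measurable
  have "{w\<in>space M. a < X w} = space M - {w\<in>space M. X w \<le> a}" by auto
  then have "measure M {w\<in>space M. a < X w} = 1 - measure M {w\<in>space M. X w \<le> a}"
    using prob_compl[OF s] by simp
  moreover have "measure M {w\<in>space M. X w \<le> a} = erlang_CDF (n - 1) 1 a"
    using erl_le[OF D, of a] by (simp add: emeasure_eq_measure)
  ultimately show ?thesis by (simp add: emeasure_eq_measure)
qed

lemma erl_CDF_le0: "erlang_CDF k 1 x \<le> erlang_CDF 0 1 x"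
proof (cases "x < 0")
  case True then show ?thesis by (simp add: erlang_CDF_def)
next
  case False
  have "exp (- x) \<le> (\<Sum>n\<le>k. x ^ n * exp (- x) / fact n)"
  proof -
    have "exp (- x) = (\<Sum>n\<in>{0}. x ^ n * exp (- x) / fact n)" by simp
    also have "\<dots> \<le> (\<Sum>n\<le>k. x ^ n * exp (- x) / fact n)"
      using False by (intro sum_mono2) auto
    finally show ?thesis .
  qed
  then show ?thesis using False by (simp add: erlang_CDF_def)
qed

lemma Zf_dom_true:
  assumes PM: "prob_space M" and mk: "marks M K pt N D S h g" and k: "k \<in> {1..K}"
  shows "emeasure M {w\<in>space M. a < Zf K h g (k, i, True) w} = ennreal (1 - erlang_CDF (D k - 1) 1 a)"
proof -
  have d: "distributed M lborel (h k i) (gamma_density (D k))" using mk k unfolding marks_def by blast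
  have "{w\<in>space M. a < Zf K h g (k, i, True) w} = {w\<in>space M. a < h k i w}"
    using k by (auto simp: Zf_def mark_index_def)
  then show ?thesis using erl_gt[OF PM d] by simp
qed

lemma Zf_dom_false:
  assumes mk: "marks M K pt N D S h g" and k: "k \<in> {1..K}"
  shows "emeasure M {w\<in>space M. a < Zf K h g (k, i, False) w} = ennreal (erlang_CDF (S k - 1) 1 (- a))"
proof -
  have d: "distributed M lborel (g k i) (gamma_density (S k))" using mk k unfolding marks_def by blast
  have "{w\<in>space M. a < Zf K h g (k, i, False) w} = {w\<in>space M. g k i w < - a}"
    using k by (auto simp: Zf_def mark_index_def)
  then show ?thesis using erl_lt[OF d] by simp
qed

theorem corollary3:
  fixes M :: "'a measure"
    and K :: nat and P \<beta> :: "nat \<Rightarrow> real" and \<alpha> :: real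
    and pt :: "nat \<Rightarrow> nat \<Rightarrow> 'a \<Rightarrow> real^2" and N :: "nat \<Rightarrow> 'a \<Rightarrow> enat"
    and Mant Mpp :: "nat \<Rightarrow> nat"
    and h1 g1 h2 g2 h3 g3 :: "nat \<Rightarrow> nat \<Rightarrow> 'a \<Rightarrow> real"
  assumes "prob_space M"
    and "K \<ge> 1"
    and "\<forall>k\<in>{1..K}. P k > 0 \<and> \<beta> k > 0"
    and "point_processes M K pt N"
    and "\<forall>k\<in>{1..K}. Mant k > 1 \<and> Mpp k > 1"
    and SU_BF: "marks M K pt N Mant (\<lambda>_. 1) h1 g1"
    and SISO: "marks M K pt N (\<lambda>_. 1) (\<lambda>_. 1) h2 g2"
    and SDMA: "marks M K pt N (\<lambda>_. 1) Mpp h3 g3"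
  shows "coverage_prob M K P \<beta> \<alpha> pt N h1 g1 \<ge> coverage_prob M K P \<beta> \<alpha> pt N h2 g2
       \<and> coverage_prob M K P \<beta> \<alpha> pt N h2 g2 \<ge> coverage_prob M K P \<beta> \<alpha> pt N h3 g3"
proof
  show "coverage_prob M K P \<beta> \<alpha> pt N h1 g1 \<ge> coverage_prob M K P \<beta> \<alpha> pt N h2 g2"
  proof (rule gen_dom[OF assms(1) assms(3) assms(2) assms(4) SU_BF SISO])
    fix m a assume m: "m \<in> mark_index K"
    obtain k i b where mm: "m = (k, i, b)" by (cases m) auto
    have k: "k \<in> {1..K}" using m mm by (auto simp: mark_index_def)
    show "emeasure M {w\<in>space M. a < Zf K h2 g2 m w} \<le> emeasure M {w\<in>space M. a < Zf K h1 g1 m w}"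
    proof (cases b)
      case True
      then show ?thesis unfolding mm
        using Zf_dom_true[OF assms(1) SU_BF k, of a i] Zf_dom_true[OF assms(1) SISO k, of a i]
          erl_CDF_le0[of "Mant k - 1" a] by (auto intro!: ennreal_leI)
    next
      case False
      then show ?thesis unfolding mm
        using Zf_dom_false[OF SU_BF k, of a i] Zf_dom_false[OF SISO k, of a i] by simp
    qed
  qed
  show "coverage_prob M K P \<beta> \<alpha> pt N h2 g2 \<ge> coverage_prob M K P \<beta> \<alpha> pt N h3 g3"
  proof (rule gen_dom[OF assms(1) assms(3) assms(2) assms(4) SISO SDMA])
    fix m a assume m: "m \<in> mark_index K"
    obtain k i b where mm: "m = (k, i, b)" by (cases m) auto
    have k: "k \<in> {1..K}" using m mm by (auto simp: mark_index_def)
    show "emeasure M {w\<in>space M. a < Zf K h3 g3 m w} \<le> emeasure M {w\<in>space M. a < Zf K h2 g2 m w}"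
    proof (cases b)
      case True
      then show ?thesis unfolding mm
        using Zf_dom_true[OF assms(1) SISO k, of a i] Zf_dom_true[OF assms(1) SDMA k, of a i] by simp
    next
      case False
      then show ?thesis unfolding mm
        using Zf_dom_false[OF SISO k, of a i] Zf_dom_false[OF SDMA k, of a i]
          erl_CDF_le0[of "Mpp k - 1" "- a"] by (auto intro!: ennreal_leI)
    qed
  qed
qed

end
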